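(* Let $x\in\mathbb{R}^N$, $\eta_x>0$, and let $\phi:\mathbb{R}^N\to\mathbb{R}$ satisfy hypothesis (H) at $x$ with radius $\eta_x$, with $p_x\neq0$. Then for every $\epsilon\in(0,\eta_x)$: $$\big|\mathcal{L}_s^\epsilon[\phi](x)-\mathcal{L}_s[\phi](x)\big|\le 4c_s s\,C_x\big(\eta_x^{2-2s}-\epsilon^{2-2s}\big)A_\epsilon+c_s(1-s)\Big(\eta_x^{-2s}+\frac{2s}{2s-1}\eta_x^{1-2s}\Big)\omega_\phi(A_\epsilon)+c_s s\,C_x\epsilon^{2-2s}.$$
   Context: Fix $N\ge1$ and $s\in(\frac12,1)$. Let $C_s=\frac{4^s s\,\Gamma(\frac12+s)}{\pi^{1/2}\Gamma(1-s)}$ and $c_s=\frac{C_s}{s(1-s)}$. Let $\mu_s$ be the Borel measure on $(0,\infty)$ with $\mathrm{d}\mu_s(t)=C_s t^{-1-2s}\,\mathrm{d}t$. For $\phi:\mathbb{R}^N\to\mathbb{R}$ and $x,y,\tilde y\in\mathbb{R}^N$ let $L_\phi(x,y,\tilde y)=\phi(x+y)+\phi(x-\tilde y)-2\phi(x)$. For $\epsilon>0$ define $$\mathcal{L}_s^\epsilon[\phi](x)=\sup_{|y|=1}\inf_{|\tilde y|=1}\int_\epsilon^\infty L_\phi(x,ty,t\tilde y)\,\mathrm{d}\mu_s(t),\qquad \mathcal{L}_s[\phi](x)=\sup_{|y|=1}\inf_{|\tilde y|=1}\int_0^\infty L_\phi(x,ty,t\tilde y)\,\mathrm{d}\mu_s(t),$$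 where $\int_0^\infty$ means $\lim_{\delta\to0^+}\int_\delta^\infty$ (a value in $[-\infty,\infty]$). Hypothesis (H) at $x$ with radius $\eta_x>0$: $\phi:\mathbb{R}^N\to\mathbb{R}$ is bounded and Borel; (i) $\phi\in C^2(\bar B_{\eta_x}(x))$, and we set $p_x=\nabla\phi(x)$, $C_x=\frac12\|\nabla^2\phi\|_{L^\infty(B_{\eta_x}(x))}$; (ii) $\phi$ is bounded and uniformly continuous on $\mathbb{R}^N\setminus\bar B_{\eta_x}(x)$, with modulus $\omega_\phi(a)=\sup\{|\phi(z)-\phi(w)|: z,w\in\mathbb{R}^N\setminus\bar B_{\eta_x}(x),\ |z-w|\le a\}$. When $p_x\ne0$ and $0<\epsilon<\eta_x$ define $$\kappa_\epsilon=\sup\Big\{a\in[0,2]:\ a^2\le\frac{8\omega_\phi(a)}{|p_x|}\cdot\frac{\frac{2s-1}{2s}\eta_x^{-2s}+\eta_x^{1-2s}}{\epsilon^{1-2s}-\eta_x^{1-2s}}\Big\},\quad A_\epsilon=\max\Big\{\frac{16C_x}{|p_x|}\cdot\frac{2s-1}{1-s}\cdot\frac{\eta_x^{2-2s}-\epsilon^{2-2s}}{\epsilon^{1-2s}-\eta_x^{1-2s}},\ \kappa_\epsilon\Big\}.$$ *)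

theory Defs
  imports "HOL-Analysis.Analysis"
begin

definition Cs :: "real \<Rightarrow> real" where
  "Cs s = (4 powr s) * s * Gamma (1/2 + s) / (sqrt pi * Gamma (1 - s))"

definition cs :: "real \<Rightarrow> real" where
  "cs s = Cs s / (s * (1 - s))"

text \<open>The measure mu_s on (0,infinity), as a measure on the real line with density
  C_s t^(-1-2s) on (0,infinity) and zero elsewhere.\<close>
definition mu_s :: "real \<Rightarrow> real measure" where
  "mu_s s = density lborel (\<lambda>t. ennreal (if 0 < t then Cs s * (t powr (- 1 - 2 * s)) else 0))"

definition Lphi :: "('a::real_normed_vector \<Rightarrow> real) \<Rightarrow> 'a \<Rightarrow> 'a \<Rightarrow> 'a \<Rightarrow> real" where
  "Lphi \<phi> x y y' = \<phi> (x + y) + \<phi> (x - y') - 2 * \<phi> x"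

definition trunc_int :: "real \<Rightarrow> ('a::real_normed_vector \<Rightarrow> real) \<Rightarrow> 'a \<Rightarrow> 'a \<Rightarrow> 'a \<Rightarrow> real \<Rightarrow> real" where
  "trunc_int s \<phi> x y y' eps = (LINT t:{eps..}|mu_s s. Lphi \<phi> x (t *\<^sub>R y) (t *\<^sub>R y'))"

definition full_int :: "real \<Rightarrow> ('a::real_normed_vector \<Rightarrow> real) \<Rightarrow> 'a \<Rightarrow> 'a \<Rightarrow> 'a \<Rightarrow> ereal" where
  "full_int s \<phi> x y y' = Lim (at_right 0) (\<lambda>\<delta>. ereal (trunc_int s \<phi> x y y' \<delta>))"

definition Leps :: "real \<Rightarrow> real \<Rightarrow> ('a::real_normed_vector \<Rightarrow> real) \<Rightarrow> 'a \<Rightarrow> ereal" where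
  "Leps s eps \<phi> x = (SUP y\<in>sphere 0 1. INF y'\<in>sphere 0 1. ereal (trunc_int s \<phi> x y y' eps))"

definition Lfull :: "real \<Rightarrow> ('a::real_normed_vector \<Rightarrow> real) \<Rightarrow> 'a \<Rightarrow> ereal" where
  "Lfull s \<phi> x = (SUP y\<in>sphere 0 1. INF y'\<in>sphere 0 1. full_int s \<phi> x y y')"

definition omega_phi :: "('a::real_normed_vector \<Rightarrow> real) \<Rightarrow> 'a \<Rightarrow> real \<Rightarrow> real \<Rightarrow> real" where
  "omega_phi \<phi> x \<eta> a = Sup {\<bar>\<phi> z - \<phi> w\<bar> | z w. z \<notin> cball x \<eta> \<and> w \<notin> cball x \<eta> \<and> dist z w \<le> a}"

definition kappa_eps :: "real \<Rightarrow> ('a::real_normed_vector \<Rightarrow> real) \<Rightarrow> 'a \<Rightarrow> real \<Rightarrow> 'a \<Rightarrow> real \<Rightarrow> real" where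
  "kappa_eps s \<phi> x \<eta> p eps = Sup {a \<in> {0..2}. a\<^sup>2 \<le> 8 * omega_phi \<phi> x \<eta> a / norm p *
      (((2 * s - 1) / (2 * s)) * \<eta> powr (-2 * s) + \<eta> powr (1 - 2 * s)) / (eps powr (1 - 2 * s) - \<eta> powr (1 - 2 * s))}"

definition A_eps :: "real \<Rightarrow> ('a::real_normed_vector \<Rightarrow> real) \<Rightarrow> 'a \<Rightarrow> real \<Rightarrow> 'a \<Rightarrow> real \<Rightarrow> real \<Rightarrow> real" where
  "A_eps s \<phi> x \<eta> p Cx eps = max (16 * Cx / norm p * ((2 * s - 1) / (1 - s)) *
      ((\<eta> powr (2 - 2 * s) - eps powr (2 - 2 * s)) / (eps powr (1 - 2 * s) - \<eta> powr (1 - 2 * s))))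
      (kappa_eps s \<phi> x \<eta> p eps)"

end

theory Submission
  imports Defs
begin
lemma Cs_pos: assumes "1/2 < s" "s < 1" shows "0 < Cs s"
  unfolding Cs_def using assms by (intro divide_pos_pos mult_pos_pos Gamma_real_pos) auto

lemma sets_mu[simp, measurable_cong]: "sets (mu_s s) = sets borel"
  by (simp add: mu_s_def)

lemma mu_AE_ne: "AE t in mu_s s. t \<noteq> a"
  unfolding mu_s_def
  by (subst AE_density) (auto intro: AE_mp[OF AE_lborel_singleton])

lemma mu_set_int:
  fixes f :: "real \<Rightarrow> real"
  assumes "0 \<le> Cs s" and S: "S \<in> sets borel" "S \<subseteq> {0<..}" and f[measurable]: "f \<in> borel_measurable borel"
  shows "set_integrable (mu_s s) S f \<longleftrightarrow> set_integrable lborel S (\<lambda>t. Cs s * t powr (- 1 - 2 * s) * f t)"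
    and "(LINT t:S|mu_s s. f t) = (LINT t:S|lborel. Cs s * t powr (- 1 - 2 * s) * f t)"
proof -
  let ?g = "\<lambda>t::real. if 0 < t then Cs s * (t powr (- 1 - 2 * s)) else 0"
  have gm[measurable]: "?g \<in> borel_measurable lborel" by measurable
  have gnn: "AE t in lborel. 0 \<le> ?g t" using assms(1) by auto
  have Sm[measurable]: "S \<in> sets lborel" using S by simp
  have eq: "(\<lambda>t. ?g t * (indicator S t * f t)) = (\<lambda>t. indicator S t * (Cs s * t powr (- 1 - 2 * s) * f t))"
    using S by (intro ext) (auto simp: indicator_def)
  show "set_integrable (mu_s s) S f \<longleftrightarrow> set_integrable lborel S (\<lambda>t. Cs s * t powr (- 1 - 2 * s) * f t)"
    unfolding set_integrable_def mu_s_def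
    by (subst integrable_density[OF _ gm gnn]) (simp_all add: eq)
  show "(LINT t:S|mu_s s. f t) = (LINT t:S|lborel. Cs s * t powr (- 1 - 2 * s) * f t)"
    unfolding set_lebesgue_integral_def mu_s_def
    by (subst integral_density[OF _ gm gnn]) (simp_all add: eq)
qed

lemma mu_null_single: "{a} \<in> null_sets (mu_s s)"
proof -
  have sp: "space (mu_s s) = UNIV" by (simp add: mu_s_def)
  have "{x \<in> space (mu_s s). \<not> x \<noteq> a} \<in> null_sets (mu_s s)"
    by (rule AE_iff_null[THEN iffD1, OF _ mu_AE_ne]) (simp add: sp)
  moreover have "{x \<in> space (mu_s s). \<not> x \<noteq> a} = {a}" by (auto simp: sp)
  ultimately show ?thesis by simp
qed

lemma mu_single: "emeasure (mu_s s) {a} = 0"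
  using mu_null_single by auto

lemma powr_comb: "x powr (- 1 - 2 * s) * x powr e = x powr (e - 2 * s - 1)" for x :: real
proof -
  have "x powr (e - 2 * s - 1) = x powr ((- 1 - 2 * s) + e)" by (rule arg_cong[where f="\<lambda>u. x powr u"]) simp
  then show ?thesis by (simp only: powr_add)
qed

lemma pow_int_fin:
  assumes s: "1/2 < s" "s < 1" and ab: "0 < a" "a \<le> b" and e: "e \<noteq> 2 * s"
  shows "set_integrable (mu_s s) {a..b} (\<lambda>t. t powr e)"
    and "(LINT t:{a..b}|mu_s s. t powr e) = Cs s * (b powr (e - 2 * s) - a powr (e - 2 * s)) / (e - 2 * s)"
proof -
  have C: "0 \<le> Cs s" using Cs_pos[OF s] by simp
  have S: "{a..b} \<subseteq> {0<..}" using ab by auto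
  have cont: "continuous_on {a..b} (\<lambda>t. Cs s * t powr (- 1 - 2 * s) * t powr e)"
    using ab by (intro continuous_intros) auto
  note X = mu_set_int[OF C _ S, of "\<lambda>t. t powr e"]
  show "set_integrable (mu_s s) {a..b} (\<lambda>t. t powr e)"
    using X(1) borel_integrable_atLeastAtMost'[OF cont] by simp
  have "(LINT t:{a..b}|lborel. Cs s * t powr (- 1 - 2 * s) * t powr e)
      = Cs s * b powr (e - 2 * s) / (e - 2 * s) - Cs s * a powr (e - 2 * s) / (e - 2 * s)"
    unfolding set_lebesgue_integral_def
  proof (rule integral_FTC_atLeastAtMost[OF ab(2) _ cont])
    fix x assume x: "a \<le> x" "x \<le> b"
    then have xp: "0 < x" using ab by simp
    have "((\<lambda>t. Cs s * t powr (e - 2 * s) / (e - 2 * s)) has_real_derivative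
       Cs s * ((e - 2 * s) * x powr (e - 2 * s - 1)) / (e - 2 * s)) (at x)"
      using xp by (auto intro!: derivative_eq_intros)
    moreover have "Cs s * ((e - 2 * s) * x powr (e - 2 * s - 1)) / (e - 2 * s)
        = Cs s * x powr (- 1 - 2 * s) * x powr e"
    proof -
      have "x powr (- 1 - 2 * s) * x powr e = x powr (e - 2 * s - 1)"
        by (rule powr_comb)
      moreover have "e - 2 * s \<noteq> 0" using e by simp
      ultimately show ?thesis by (simp add: field_simps)
    qed
    ultimately show "((\<lambda>t. Cs s * t powr (e - 2 * s) / (e - 2 * s)) has_vector_derivative
       Cs s * x powr (- 1 - 2 * s) * x powr e) (at x within {a..b})"
      by (simp add: has_real_derivative_iff_has_vector_derivative[symmetric] has_field_derivative_at_within)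
  qed
  then show "(LINT t:{a..b}|mu_s s. t powr e) = Cs s * (b powr (e - 2 * s) - a powr (e - 2 * s)) / (e - 2 * s)"
    using X(2) by (simp add: diff_divide_distrib right_diff_distrib)
qed

lemma pow_int_tail:
  assumes s: "1/2 < s" "s < 1" and a: "0 < a" and e: "e < 2 * s"
  shows "set_integrable (mu_s s) {a..} (\<lambda>t. t powr e)"
    and "(LINT t:{a..}|mu_s s. t powr e) = Cs s * a powr (e - 2 * s) / (2 * s - e)"
proof -
  have C: "0 \<le> Cs s" using Cs_pos[OF s] by simp
  have S: "{a..} \<subseteq> {0<..}" using a by auto
  note X = mu_set_int[OF C _ S, of "\<lambda>t. t powr e"]
  let ?f = "\<lambda>t. Cs s * t powr (- 1 - 2 * s) * t powr e"
  have "((\<lambda>x. x powr (e - 2 * s - 1)) has_integral -(a powr (e - 2 * s - 1 + 1)) / (e - 2 * s - 1 + 1)) {a..}"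
    by (rule has_integral_powr_to_inf) (use e a in auto)
  then have "((\<lambda>x. Cs s * x powr (e - 2 * s - 1)) has_integral Cs s * (-(a powr (e - 2 * s - 1 + 1)) / (e - 2 * s - 1 + 1))) {a..}"
    by (rule has_integral_mult_right)
  then have hi0: "(?f has_integral Cs s * (-(a powr (e - 2 * s - 1 + 1)) / (e - 2 * s - 1 + 1))) {a..}"
    by (rule has_integral_eq[rotated]) (use a in \<open>auto simp: powr_comb mult.assoc\<close>)
  have "Cs s * (-(a powr (e - 2 * s - 1 + 1)) / (e - 2 * s - 1 + 1)) = Cs s * a powr (e - 2 * s) / (2 * s - e)"
    using e by (simp add: field_simps)
  with hi0 have hi: "(?f has_integral Cs s * a powr (e - 2 * s) / (2 * s - e)) {a..}" by simp
  have "?f absolutely_integrable_on {a..}"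
    using hi C a by (intro nonnegative_absolutely_integrable_1) (auto simp: integrable_on_def)
  then have li: "set_integrable lborel {a..} ?f"
    unfolding set_integrable_def by (subst (asm) integrable_completion) auto
  show "set_integrable (mu_s s) {a..} (\<lambda>t. t powr e)" using X(1) li by simp
  show "(LINT t:{a..}|mu_s s. t powr e) = Cs s * a powr (e - 2 * s) / (2 * s - e)"
    using X(2) set_borel_integral_eq_integral(2)[OF li] integral_unique[OF hi] by simp
qed

locale cor =
  fixes \<phi> :: "'a::euclidean_space \<Rightarrow> real" and x :: 'a and \<eta> s :: real
    and g :: "'a \<Rightarrow> 'a" and H :: "'a \<Rightarrow> 'a \<Rightarrow>\<^sub>L 'a"
  assumes s1: "1/2 < s" and s2: "s < 1"
    and eta: "0 < \<eta>"
    and bdd: "bounded (range \<phi>)"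
    and borel: "\<phi> \<in> borel_measurable borel"
    and grad: "\<And>z. z \<in> cball x \<eta> \<Longrightarrow> (\<phi> has_derivative (\<lambda>h. g z \<bullet> h)) (at z within cball x \<eta>)"
    and hess: "\<And>z. z \<in> cball x \<eta> \<Longrightarrow> (g has_derivative blinfun_apply (H z)) (at z within cball x \<eta>)"
    and hess_cont: "continuous_on (cball x \<eta>) H"
    and p_nz: "g x \<noteq> 0"
begin

definition Cx where "Cx = (1/2) * (SUP z\<in>ball x \<eta>. norm (H z))"

lemma H_bound: assumes "z \<in> cball x \<eta>" shows "norm (H z) \<le> 2 * Cx"
proof -
  have "compact (H ` cball x \<eta>)" by (rule compact_continuous_image[OF hess_cont compact_cball])
  then have "bounded (H ` cball x \<eta>)" by (rule compact_imp_bounded)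
  then obtain B where B0: "\<forall>y\<in>H ` cball x \<eta>. norm y \<le> B" using bounded_iff by blast
  have B: "\<And>z. z \<in> cball x \<eta> \<Longrightarrow> norm (H z) \<le> B" using B0 by auto
  have bda: "bdd_above ((\<lambda>z. norm (H z)) ` ball x \<eta>)"
    using B by (intro bdd_aboveI[of _ B]) auto
  have "\<forall>y\<in>ball x \<eta>. norm (H y) \<le> (SUP z\<in>ball x \<eta>. norm (H z))"
    using bda by (auto intro: cSUP_upper)
  moreover have "continuous_on (closure (ball x \<eta>)) H" using hess_cont eta by (simp add: closure_ball)
  moreover have "z \<in> closure (ball x \<eta>)" using assms eta by (simp add: closure_ball)
  ultimately have "norm (H z) \<le> (SUP z\<in>ball x \<eta>. norm (H z))"
    by (intro continuous_on_closure_norm_le) auto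
  then show ?thesis by (simp add: Cx_def)
qed

lemma Cx_nonneg: "0 \<le> Cx"
  using H_bound[of x] eta by (smt (verit) centre_in_cball norm_ge_zero)

lemma g_lip: assumes "z \<in> cball x \<eta>" shows "norm (g z - g x) \<le> 2 * Cx * norm (z - x)"
proof (rule differentiable_bound[OF convex_cball hess _ assms])
  show "x \<in> cball x \<eta>" using eta by simp
  fix w assume "w \<in> cball x \<eta>"
  then show "onorm (blinfun_apply (H w)) \<le> 2 * Cx" using H_bound by (simp add: norm_blinfun.rep_eq[symmetric])
qed

lemma first_order:
  assumes r: "0 \<le> r" "r \<le> \<eta>" and z: "z1 \<in> cball x r" "z2 \<in> cball x r"
  shows "\<bar>\<phi> z1 - \<phi> z2 - g x \<bullet> (z1 - z2)\<bar> \<le> 2 * Cx * r * norm (z1 - z2)"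
proof -
  have sub: "cball x r \<subseteq> cball x \<eta>" using r by auto
  have "norm ((\<lambda>z. \<phi> z - g x \<bullet> z) z1 - (\<lambda>z. \<phi> z - g x \<bullet> z) z2) \<le> 2 * Cx * r * norm (z1 - z2)"
  proof (rule differentiable_bound[OF convex_cball _ _ z])
    fix z assume zr: "z \<in> cball x r"
    then have "z \<in> cball x \<eta>" using sub by auto
    have "(\<phi> has_derivative (\<lambda>h. g z \<bullet> h)) (at z within cball x r)"
      by (rule has_derivative_subset[OF grad[OF \<open>z \<in> cball x \<eta>\<close>] sub])
    then show "((\<lambda>z. \<phi> z - g x \<bullet> z) has_derivative (\<lambda>h. g z \<bullet> h - g x \<bullet> h)) (at z within cball x r)"
      by (auto intro!: derivative_eq_intros)
    show "onorm (\<lambda>h. g z \<bullet> h - g x \<bullet> h) \<le> 2 * Cx * r"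
    proof (rule onorm_le)
      fix h
      have "norm (g z \<bullet> h - g x \<bullet> h) = \<bar>(g z - g x) \<bullet> h\<bar>" by (simp add: inner_diff_left)
      also have "\<dots> \<le> norm (g z - g x) * norm h" by (rule Cauchy_Schwarz_ineq2)
      also have "\<dots> \<le> (2 * Cx * norm (z - x)) * norm h"
        by (intro mult_right_mono g_lip \<open>z \<in> cball x \<eta>\<close>) auto
      also have "\<dots> \<le> (2 * Cx * r) * norm h"
        using zr Cx_nonneg by (intro mult_right_mono mult_left_mono) (auto simp: dist_norm norm_minus_commute)
      finally show "norm (g z \<bullet> h - g x \<bullet> h) \<le> 2 * Cx * r * norm h" .
    qed
  qed
  then show ?thesis by (simp add: inner_diff_right)
qed

lemma phi_cont: "continuous_on (cball x \<eta>) \<phi>"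
  using grad by (rule has_derivative_continuous_on)

lemma g_cont: "continuous_on (cball x \<eta>) g"
  using hess by (rule has_derivative_continuous_on)

lemma line_deriv:
  assumes "norm v = 1" "0 < l" "l < \<eta>"
  shows "((\<lambda>l. \<phi> (x + l *\<^sub>R v)) has_vector_derivative (g (x + l *\<^sub>R v) \<bullet> v)) (at l)"
proof -
  have inb: "x + l *\<^sub>R v \<in> ball x \<eta>" using assms by (auto simp: dist_norm)
  have d1: "(\<phi> has_derivative (\<lambda>h. g (x + l *\<^sub>R v) \<bullet> h)) (at (x + l *\<^sub>R v))"
  proof -
    have "at (x + l *\<^sub>R v) within cball x \<eta> = at (x + l *\<^sub>R v)"
      by (rule at_within_interior) (use inb in simp)
    then show ?thesis using grad[of "x + l *\<^sub>R v"] inb by auto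
  qed
  have "((\<lambda>l. x + l *\<^sub>R v) has_derivative (\<lambda>h. h *\<^sub>R v)) (at l)"
    by (auto intro!: derivative_eq_intros)
  from has_derivative_compose[OF this d1]
  have "((\<lambda>l. \<phi> (x + l *\<^sub>R v)) has_derivative (\<lambda>h. h *\<^sub>R (g (x + l *\<^sub>R v) \<bullet> v))) (at l)"
    by (simp add: o_def inner_scaleR_right mult.commute)
  then show ?thesis by (simp add: has_vector_derivative_def)
qed

lemma second_order:
  assumes v: "norm v = 1" and t: "0 \<le> t" "t \<le> \<eta>"
  shows "\<bar>\<phi> (x + t *\<^sub>R v) + \<phi> (x - t *\<^sub>R v) - 2 * \<phi> x\<bar> \<le> 2 * Cx * t\<^sup>2"
proof (cases "t = 0")
  case True then show ?thesis by simp
next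
  case False
  then have t0: "0 < t" using t by simp
  have mv: "norm (-v) = 1" using v by simp
  let ?f = "\<lambda>l. \<phi> (x + l *\<^sub>R v) + \<phi> (x + l *\<^sub>R (-v))"
  have inc: "x + l *\<^sub>R w \<in> cball x \<eta>" if "l \<in> {0..t}" "norm w = 1" for l w
    using that t by (auto simp: dist_norm)
  have "norm (?f t - ?f 0) \<le> 2 * Cx * t\<^sup>2 - 2 * Cx * 0\<^sup>2"
  proof (rule differentiable_bound_general[OF t0, where f' = "\<lambda>l. g (x + l *\<^sub>R v) \<bullet> v + g (x + l *\<^sub>R (-v)) \<bullet> (-v)"
        and \<phi>' = "\<lambda>l. 4 * Cx * l"])
    have c1: "continuous_on {0..t} (\<lambda>l. \<phi> (x + l *\<^sub>R w))" if "norm w = 1" for w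
      by (rule continuous_on_compose2[OF phi_cont, of "{0..t}" "\<lambda>l. x + l *\<^sub>R w"])
         (use inc that in \<open>auto intro!: continuous_intros\<close>)
    show "continuous_on {0..t} ?f" using c1[OF v] c1[OF mv] by (intro continuous_intros)
    show "continuous_on {0..t} (\<lambda>l. 2 * Cx * l\<^sup>2)" by (intro continuous_intros)
    fix l assume l: "0 < l" "l < t"
    then have l2: "l < \<eta>" using t by simp
    show "(?f has_vector_derivative g (x + l *\<^sub>R v) \<bullet> v + g (x + l *\<^sub>R (-v)) \<bullet> (-v)) (at l)"
      by (intro has_vector_derivative_add line_deriv v mv l(1) l2)
    show "((\<lambda>l. 2 * Cx * l\<^sup>2) has_vector_derivative 4 * Cx * l) (at l)"
      by (auto intro!: derivative_eq_intros simp flip: has_real_derivative_iff_has_vector_derivative)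
    have "norm (g (x + l *\<^sub>R v) \<bullet> v + g (x + l *\<^sub>R (-v)) \<bullet> (-v))
        = \<bar>(g (x + l *\<^sub>R v) - g x) \<bullet> v - (g (x + l *\<^sub>R (-v)) - g x) \<bullet> v\<bar>"
      by (simp add: inner_diff_left)
    also have "\<dots> \<le> norm (g (x + l *\<^sub>R v) - g x) * norm v + norm (g (x + l *\<^sub>R (-v)) - g x) * norm v"
      by (smt (verit) Cauchy_Schwarz_ineq2)
    also have "\<dots> \<le> 2 * Cx * l + 2 * Cx * l"
    proof -
      have "norm (g (x + l *\<^sub>R w) - g x) \<le> 2 * Cx * l" if "norm w = 1" for w
        using g_lip[OF inc[of l w]] that l by simp
      from this[OF v] this[OF mv] show ?thesis using v by (simp add: algebra_simps)
    qed
    finally show "norm (g (x + l *\<^sub>R v) \<bullet> v + g (x + l *\<^sub>R (-v)) \<bullet> (-v)) \<le> 4 * Cx * l" by (simp add: algebra_simps)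
  qed
  then show ?thesis by (simp add: algebra_simps)
qed

end

lemma sin_half_ge: assumes "0 \<le> y" "y \<le> pi/2" shows "y / 2 \<le> sin y"
proof (cases "y \<le> pi/3")
  case True
  have "(\<lambda>y. sin y - y/2) 0 \<le> (\<lambda>y. sin y - y/2) y"
  proof (rule DERIV_nonneg_imp_nondecreasing[OF assms(1)])
    fix z assume z: "0 \<le> z" "z \<le> y"
    show "\<exists>d. ((\<lambda>y. sin y - y/2) has_real_derivative d) (at z) \<and> 0 \<le> d"
    proof (intro exI conjI)
      show "((\<lambda>y. sin y - y/2) has_real_derivative cos z - 1/2) (at z)"
        by (auto intro!: derivative_eq_intros)
      have "cos (pi/3) \<le> cos z" using z True by (intro cos_monotone_0_pi_le) auto
      then show "0 \<le> cos z - 1/2" by (simp add: cos_60)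
    qed
  qed
  then show ?thesis by simp
next
  case False
  have "sin (pi/3) \<le> sin y" using False assms by (intro sin_monotone_2pi_le) auto
  moreover have "y/2 \<le> sqrt 3 / 2"
  proof -
    have "1.7 \<le> sqrt 3" by (rule real_le_rsqrt) (simp add: power2_eq_square)
    then show ?thesis using assms pi_approx by simp
  qed
  ultimately show ?thesis by (simp add: sin_60)
qed

lemma chord_identity: "(cos A - cos B)\<^sup>2 + (sin A - sin B)\<^sup>2 = 4 * (sin ((A - B)/2))\<^sup>2" for A B :: real
proof -
  have "(cos A - cos B)\<^sup>2 + (sin A - sin B)\<^sup>2 = 2 - 2 * (cos A * cos B + sin A * sin B)"
    by (simp add: power2_diff algebra_simps)
  also have "\<dots> = 2 - 2 * cos (A - B)" by (simp add: cos_diff)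
  also have "\<dots> = 2 - 2 * cos (2 * ((A - B)/2))"
  proof -
    have e: "2 * ((A - B)/2) = A - B" by simp
    show ?thesis by (simp only: e)
  qed
  also have "\<dots> = 4 * (sin ((A - B)/2))\<^sup>2" by (subst cos_double_sin) (simp add: algebra_simps)
  finally show ?thesis .
qed

lemma sin_sq_le: "(sin y)\<^sup>2 \<le> y\<^sup>2" for y :: real
  by (rule abs_le_square_iff[THEN iffD1, OF abs_sin_x_le_abs_x])

lemma orth_norm2:
  fixes v e :: "'a::real_inner"
  assumes "norm v = 1" "norm e = 1" "e \<bullet> v = 0"
  shows "(norm (a *\<^sub>R v + b *\<^sub>R e))\<^sup>2 = a\<^sup>2 + b\<^sup>2"
proof -
  have "v \<bullet> v = 1" "e \<bullet> e = 1" "v \<bullet> e = 0" using assms by (simp_all add: norm_eq_1 inner_commute)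
  then show ?thesis
    by (simp only: power2_norm_eq_inner) (simp add: inner_add_left inner_add_right inner_commute power2_eq_square)
qed

lemma orth_exists:
  assumes "DIM('a::euclidean_space) \<ge> 2"
  shows "\<exists>e::'a. norm e = 1 \<and> e \<bullet> v = 0"
proof -
  have "\<not> (\<forall>a\<in>(Basis::'a set). \<forall>b\<in>Basis. a = b)"
  proof -
    have "\<not> card (Basis::'a set) \<le> Suc 0" using assms by simp
    then show ?thesis using card_le_Suc0_iff_eq[OF finite_Basis] by blast
  qed
  then obtain b1 b2 :: 'a where b: "b1 \<in> Basis" "b2 \<in> Basis" "b1 \<noteq> b2" by auto
  have bb: "b1 \<bullet> b1 = 1" "b2 \<bullet> b2 = 1" "b1 \<bullet> b2 = 0" "b2 \<bullet> b1 = 0"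
    using b by (auto simp: inner_Basis)
  define e' where "e' = (v \<bullet> b2) *\<^sub>R b1 - (v \<bullet> b1) *\<^sub>R b2"
  have cm: "b1 \<bullet> v = v \<bullet> b1" "b2 \<bullet> v = v \<bullet> b2" by (simp_all add: inner_commute)
  have e'v: "e' \<bullet> v = 0" unfolding e'_def inner_diff_left inner_scaleR_left cm by simp
  show ?thesis
  proof (cases "e' = 0")
    case False
    then show ?thesis using e'v by (intro exI[of _ "e' /\<^sub>R norm e'"]) auto
  next
    case True
    have "e' \<bullet> b1 = v \<bullet> b2" using bb by (simp add: e'_def inner_diff_left)
    then have "v \<bullet> b2 = 0" using True by simp
    have "e' \<bullet> b2 = - (v \<bullet> b1)" using bb by (simp add: e'_def inner_diff_left)
    then have "v \<bullet> b1 = 0" using True by simp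
    then show ?thesis using b by (intro exI[of _ b1]) (auto simp: inner_commute)
  qed
qed

lemma sphere_param:
  fixes v1 v2 :: "'a::euclidean_space"
  assumes "DIM('a) \<ge> 2" "norm v1 = 1" "norm v2 = 1"
  shows "\<exists>e \<theta>. norm e = 1 \<and> e \<bullet> v1 = 0 \<and> 0 \<le> \<theta> \<and> \<theta> \<le> pi \<and> v2 = cos \<theta> *\<^sub>R v1 + sin \<theta> *\<^sub>R e"
proof -
  define c where "c = v1 \<bullet> v2"
  have c1: "\<bar>c\<bar> \<le> 1" using Cauchy_Schwarz_ineq2[of v1 v2] assms by (simp add: c_def)
  define \<theta> where "\<theta> = arccos c"
  have th: "0 \<le> \<theta>" "\<theta> \<le> pi" "cos \<theta> = c" "sin \<theta> = sqrt (1 - c\<^sup>2)"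
    using c1 by (auto simp: \<theta>_def arccos_lbound arccos_ubound cos_arccos sin_arccos)
  define w where "w = v2 - c *\<^sub>R v1"
  have vv: "v1 \<bullet> v1 = 1" "v2 \<bullet> v2 = 1" using assms by (simp_all add: norm_eq_1)
  have ww: "w \<bullet> w = 1 - c\<^sup>2"
    by (simp add: w_def inner_diff_left inner_diff_right vv c_def inner_commute power2_eq_square)
  have wv: "w \<bullet> v1 = 0" by (simp add: w_def inner_diff_left inner_diff_right vv c_def inner_commute)
  show ?thesis
  proof (cases "w = 0")
    case False
    have nw: "norm w = sin \<theta>" using ww th by (simp add: norm_eq_sqrt_inner)
    have "1 - c\<^sup>2 \<noteq> 0" using ww False by (metis inner_eq_zero_iff)
    then have sq: "sqrt (1 - c\<^sup>2) \<noteq> 0" by simp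
    have "v2 = cos \<theta> *\<^sub>R v1 + sin \<theta> *\<^sub>R (w /\<^sub>R norm w)"
    proof -
      have sn: "sin \<theta> \<noteq> 0" using sq th by simp
      have "sin \<theta> *\<^sub>R (w /\<^sub>R norm w) = w" using nw sn by simp
      then show ?thesis using th(3) by (simp add: w_def)
    qed
    moreover have "norm (w /\<^sub>R norm w) = 1" "(w /\<^sub>R norm w) \<bullet> v1 = 0" using False wv by auto
    ultimately show ?thesis using th by blast
  next
    case True
    then have "c\<^sup>2 = 1" using ww by simp
    then have s0: "sin \<theta> = 0" using th by simp
    obtain e :: 'a where e: "norm e = 1" "e \<bullet> v1 = 0" using orth_exists[OF assms(1)] by blast
    have "v2 = cos \<theta> *\<^sub>R v1 + sin \<theta> *\<^sub>R e" using True th s0 by (simp add: w_def)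
    then show ?thesis using e th by blast
  qed
qed

context cor begin

definition om where "om a = omega_phi \<phi> x \<eta> a"

lemma phi_bound: obtains B where "\<And>z. \<bar>\<phi> z\<bar> \<le> B"
  using bdd by (auto simp: bounded_iff)

lemma outside_exists: "\<exists>z. z \<notin> cball x \<eta>"
proof -
  obtain b :: 'a where b: "b \<in> Basis" using nonempty_Basis by blast
  have "x + (\<eta> + 1) *\<^sub>R b \<notin> cball x \<eta>" using b eta by (auto simp: dist_norm)
  then show ?thesis by blast
qed

lemma om_bdd: "bdd_above {\<bar>\<phi> z - \<phi> w\<bar> | z w. z \<notin> cball x \<eta> \<and> w \<notin> cball x \<eta> \<and> dist z w \<le> a}"
proof -
  obtain B where B: "\<And>z. \<bar>\<phi> z\<bar> \<le> B" using phi_bound by blast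
  show ?thesis
  proof (rule bdd_aboveI[of _ "2 * B"])
    fix y assume "y \<in> {\<bar>\<phi> z - \<phi> w\<bar> | z w. z \<notin> cball x \<eta> \<and> w \<notin> cball x \<eta> \<and> dist z w \<le> a}"
    then obtain z w where "y = \<bar>\<phi> z - \<phi> w\<bar>" by blast
    then show "y \<le> 2 * B" using B[of z] B[of w] by simp
  qed
qed

lemma om_upper:
  assumes "z \<notin> cball x \<eta>" "w \<notin> cball x \<eta>" "dist z w \<le> a"
  shows "\<bar>\<phi> z - \<phi> w\<bar> \<le> om a"
  unfolding om_def omega_phi_def
  by (rule cSup_upper[OF _ om_bdd]) (use assms in blast)

lemma om_nonneg: assumes "0 \<le> a" shows "0 \<le> om a"
proof -
  obtain z where "z \<notin> cball x \<eta>" using outside_exists by blast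
  then have "\<bar>\<phi> z - \<phi> z\<bar> \<le> om a" using assms by (intro om_upper) auto
  then show ?thesis by simp
qed

lemma om_mono: assumes "0 \<le> a" "a \<le> b" shows "om a \<le> om b"
  unfolding om_def omega_phi_def
proof (rule cSup_subset_mono[OF _ om_bdd])
  obtain z where "z \<notin> cball x \<eta>" using outside_exists by blast
  then show "{\<bar>\<phi> z - \<phi> w\<bar> | z w. z \<notin> cball x \<eta> \<and> w \<notin> cball x \<eta> \<and> dist z w \<le> a} \<noteq> {}"
    using assms by fastforce
  show "{\<bar>\<phi> z - \<phi> w\<bar> | z w. z \<notin> cball x \<eta> \<and> w \<notin> cball x \<eta> \<and> dist z w \<le> a}
    \<subseteq> {\<bar>\<phi> z - \<phi> w\<bar> | z w. z \<notin> cball x \<eta> \<and> w \<notin> cball x \<eta> \<and> dist z w \<le> b}"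
    using assms by fastforce
qed

lemma chain_bound:
  assumes dim: "DIM('a) \<ge> 2" and v: "norm v1 = 1" "norm v2 = 1" and t: "\<eta> < t"
  shows "\<bar>\<phi> (x + t *\<^sub>R v1) - \<phi> (x + t *\<^sub>R v2)\<bar> \<le> 2 * (1 + t) * om (norm (v1 - v2))"
proof -
  obtain e \<theta> where e: "norm e = 1" "e \<bullet> v1 = 0" and th: "0 \<le> \<theta>" "\<theta> \<le> pi"
    and v2: "v2 = cos \<theta> *\<^sub>R v1 + sin \<theta> *\<^sub>R e"
    using sphere_param[OF dim v] by blast
  define \<gamma> where "\<gamma> l = cos (l * \<theta>) *\<^sub>R v1 + sin (l * \<theta>) *\<^sub>R e" for l
  define a where "a = norm (v1 - v2)"
  have t0: "0 < t" using t eta by simp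
  have g_norm: "norm (\<gamma> l) = 1" for l
    using orth_norm2[OF v(1) e(1) e(2), of "cos (l * \<theta>)" "sin (l * \<theta>)"]
    by (simp add: \<gamma>_def) (metis norm_ge_zero power2_eq_iff_nonneg power_one zero_le_one)
  have g_diff: "norm (\<gamma> l1 - \<gamma> l2) \<le> \<bar>l1 - l2\<bar> * \<theta>" for l1 l2
  proof -
    have "\<gamma> l1 - \<gamma> l2 = (cos (l1 * \<theta>) - cos (l2 * \<theta>)) *\<^sub>R v1 + (sin (l1 * \<theta>) - sin (l2 * \<theta>)) *\<^sub>R e"
      by (simp add: \<gamma>_def algebra_simps)
    then have "(norm (\<gamma> l1 - \<gamma> l2))\<^sup>2 = (cos (l1 * \<theta>) - cos (l2 * \<theta>))\<^sup>2 + (sin (l1 * \<theta>) - sin (l2 * \<theta>))\<^sup>2"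
      using orth_norm2[OF v(1) e(1) e(2), of "cos (l1 * \<theta>) - cos (l2 * \<theta>)" "sin (l1 * \<theta>) - sin (l2 * \<theta>)"] by simp
    also have "\<dots> = 4 * (sin ((l1 * \<theta> - l2 * \<theta>)/2))\<^sup>2" by (rule chord_identity)
    also have "\<dots> \<le> 4 * ((l1 * \<theta> - l2 * \<theta>)/2)\<^sup>2"
      by (intro mult_left_mono abs_le_square_iff[THEN iffD1, OF abs_sin_x_le_abs_x]) auto
    also have "\<dots> = (l1 * \<theta> - l2 * \<theta>)\<^sup>2" by (simp add: power_divide)
    also have "\<dots> = ((l1 - l2) * \<theta>)\<^sup>2" by (simp add: left_diff_distrib)
    also have "\<dots> = (\<bar>l1 - l2\<bar> * \<theta>)\<^sup>2" by (simp add: power_mult_distrib)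
    finally show ?thesis by (rule power2_le_imp_le) (use th in simp)
  qed
  have a_ge: "\<theta> / 2 \<le> a"
  proof -
    have "v1 - v2 = \<gamma> 0 - \<gamma> 1" by (simp add: \<gamma>_def v2)
    have "v1 - v2 = (1 - cos \<theta>) *\<^sub>R v1 + (0 - sin \<theta>) *\<^sub>R e" by (simp add: v2 algebra_simps)
    then have "a\<^sup>2 = (cos 0 - cos \<theta>)\<^sup>2 + (sin 0 - sin \<theta>)\<^sup>2"
      unfolding a_def using orth_norm2[OF v(1) e(1) e(2), of "1 - cos \<theta>" "0 - sin \<theta>"] by simp
    also have "\<dots> = (2 * sin (\<theta>/2))\<^sup>2" by (subst chord_identity) (simp add: power2_eq_square)
    finally have "a = 2 * sin (\<theta>/2)"
      using th by (subst (asm) power2_eq_iff_nonneg) (auto simp: a_def intro!: sin_ge_zero)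
    moreover have "\<theta>/2/2 \<le> sin (\<theta>/2)" using th by (intro sin_half_ge) auto
    ultimately show ?thesis by simp
  qed
  define n where "n = nat \<lceil>2 * t\<rceil>"
  have n1: "2 * t \<le> real n" unfolding n_def by linarith
  have n2: "real n \<le> 2 * t + 1" unfolding n_def using t0 by linarith
  have npos: "0 < n" using n1 t0 by (cases n) auto
  define z where "z k = x + t *\<^sub>R \<gamma> (real k / real n)" for k :: nat
  have z_out: "z k \<notin> cball x \<eta>" for k
    using g_norm t t0 by (auto simp: z_def dist_norm)
  have step: "\<bar>\<phi> (z k) - \<phi> (z (Suc k))\<bar> \<le> om a" for k
  proof (rule om_upper[OF z_out z_out])
    have "dist (z k) (z (Suc k)) = t * norm (\<gamma> (real k / real n) - \<gamma> (real (Suc k) / real n))"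
      using t0 by (simp add: z_def dist_norm scaleR_diff_right[symmetric])
    also have "\<dots> \<le> t * (\<bar>real k / real n - real (Suc k) / real n\<bar> * \<theta>)"
      using t0 by (intro mult_left_mono g_diff) auto
    also have "\<dots> = t * \<theta> / real n" using npos by (simp add: field_simps)
    also have "\<dots> \<le> \<theta> / 2"
      using n1 npos t0 th by (simp add: field_simps) (metis mult.commute mult_left_mono)
    finally show "dist (z k) (z (Suc k)) \<le> a" using a_ge by simp
  qed
  have "\<phi> (z 0) - \<phi> (z n) = (\<Sum>k<n. \<phi> (z k) - \<phi> (z (Suc k)))"
    by (rule sum_lessThan_telescope'[of "\<lambda>k. \<phi> (z k)", symmetric])
  then have "\<bar>\<phi> (z 0) - \<phi> (z n)\<bar> \<le> (\<Sum>k<n. \<bar>\<phi> (z k) - \<phi> (z (Suc k))\<bar>)"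
    by (simp add: sum_abs)
  also have "\<dots> \<le> (\<Sum>k<n. om a)" by (intro sum_mono step)
  also have "\<dots> = real n * om a" by simp
  also have "\<dots> \<le> 2 * (1 + t) * om a"
    using n2 om_nonneg[of a] by (intro mult_right_mono) (auto simp: a_def)
  finally show ?thesis
    using npos by (simp add: z_def \<gamma>_def v2 a_def)
qed

end

lemma bdd_set_int:
  fixes f :: "real \<Rightarrow> real"
  assumes s: "1/2 < s" "s < 1" and a: "0 < a" and f[measurable]: "f \<in> borel_measurable borel"
    and B: "\<And>t. \<bar>f t\<bar> \<le> B"
  shows "set_integrable (mu_s s) {a..} f"
proof -
  have I: "set_integrable (mu_s s) {a..} (\<lambda>t. B * t powr 0)"
    using pow_int_tail(1)[OF s a, of 0] s by auto
  show ?thesis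
  proof (rule set_integrable_bound[OF I])
    show "set_borel_measurable (mu_s s) {a..} f"
      unfolding set_borel_measurable_def by measurable
    show "AE t in mu_s s. t \<in> {a..} \<longrightarrow> norm (f t) \<le> norm (B * t powr 0)"
      using a B by (intro AE_I2) (auto, smt (verit) B)
  qed
qed

lemma pow_int_zero:
  assumes s: "1/2 < s" "s < 1" and b: "0 < b" and e: "2 * s < e"
  shows "set_integrable (mu_s s) {0<..b} (\<lambda>t. t powr e)"
proof -
  have C: "0 \<le> Cs s" using Cs_pos[OF s] by simp
  have S: "{0<..b} \<subseteq> {0::real<..}" by auto
  note X = mu_set_int[OF C _ S, of "\<lambda>t. t powr e"]
  let ?f = "\<lambda>t. Cs s * t powr (- 1 - 2 * s) * t powr e"
  have "((\<lambda>x. x powr (e - 2 * s - 1)) has_integral (b powr (e - 2 * s - 1 + 1) / (e - 2 * s - 1 + 1))) {0..b}"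
    by (rule has_integral_powr_from_0) (use e b in auto)
  then have "((\<lambda>x. Cs s * x powr (e - 2 * s - 1)) has_integral Cs s * (b powr (e - 2 * s - 1 + 1) / (e - 2 * s - 1 + 1))) {0..b}"
    by (rule has_integral_mult_right)
  then have hi: "(?f has_integral Cs s * (b powr (e - 2 * s - 1 + 1) / (e - 2 * s - 1 + 1))) {0..b}"
    by (rule has_integral_eq[rotated]) (auto simp: powr_comb mult.assoc)
  have "?f absolutely_integrable_on {0..b}"
    using hi C by (intro nonnegative_absolutely_integrable_1) (auto simp: integrable_on_def)
  then have li: "set_integrable lborel {0..b} ?f"
    unfolding set_integrable_def by (subst (asm) integrable_completion) auto
  then have "set_integrable lborel {0<..b} ?f"
    by (rule set_integrable_subset) auto
  then show ?thesis using X(1) by simp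
qed

lemma mu_set_int_oc:
  fixes f :: "real \<Rightarrow> real"
  assumes [measurable]: "f \<in> borel_measurable borel"
  shows "set_integrable (mu_s s) {a<..} f \<longleftrightarrow> set_integrable (mu_s s) {a..} f"
    and "(LINT t:{a<..}|mu_s s. f t) = (LINT t:{a..}|mu_s s. f t)"
proof -
  have X: "({a<..} - {a..}) \<union> ({a..} - {a<..}) \<subseteq> {a}" by auto
  show "set_integrable (mu_s s) {a<..} f \<longleftrightarrow> set_integrable (mu_s s) {a..} f"
    by (rule set_integrable_discrete_difference[OF _ X]) (auto simp: mu_single)
  show "(LINT t:{a<..}|mu_s s. f t) = (LINT t:{a..}|mu_s s. f t)"
    by (rule set_integral_discrete_difference[OF _ X]) (auto simp: mu_single)
qed

context cor begin

definition J where "J \<delta> v = (LINT t:{\<delta>..}|mu_s s. \<phi> (x + t *\<^sub>R v) - \<phi> x)"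

lemma phi_line_meas[measurable]: "(\<lambda>t. \<phi> (x + t *\<^sub>R v)) \<in> borel_measurable borel"
  by (rule measurable_compose[OF _ borel], rule borel_measurable_continuous_onI) (intro continuous_intros)

lemma phi_meas[measurable]: "\<phi> \<in> borel_measurable borel" by (rule borel)

lemma int_diff:
  assumes "0 < a"
  shows "set_integrable (mu_s s) {a..} (\<lambda>t. \<phi> (x + t *\<^sub>R v) - \<phi> (x + t *\<^sub>R w))"
proof -
  obtain B where B: "\<And>z. \<bar>\<phi> z\<bar> \<le> B" using phi_bound by blast
  show ?thesis
  proof (rule bdd_set_int[OF s1 s2 assms, where B="2*B"])
    show "(\<lambda>t. \<phi> (x + t *\<^sub>R v) - \<phi> (x + t *\<^sub>R w)) \<in> borel_measurable borel"
      by (intro borel_measurable_diff phi_line_meas)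
    fix t show "\<bar>\<phi> (x + t *\<^sub>R v) - \<phi> (x + t *\<^sub>R w)\<bar> \<le> 2 * B"
      using B[of "x + t *\<^sub>R v"] B[of "x + t *\<^sub>R w"] by simp
  qed
qed

lemma int_J:
  assumes "0 < a"
  shows "set_integrable (mu_s s) {a..} (\<lambda>t. \<phi> (x + t *\<^sub>R v) - \<phi> x)"
  using int_diff[OF assms, of v 0] by simp

lemma J_diff:
  assumes "0 < a"
  shows "J a v - J a w = (LINT t:{a..}|mu_s s. \<phi> (x + t *\<^sub>R v) - \<phi> (x + t *\<^sub>R w))"
  unfolding J_def using set_integral_diff(2)[OF int_J[OF assms, of v] int_J[OF assms, of w]] by simp

lemma trunc_split:
  assumes "0 < a"
  shows "trunc_int s \<phi> x y y' a = J a y + J a (-y')"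
proof -
  have "trunc_int s \<phi> x y y' a = (LINT t:{a..}|mu_s s. (\<phi> (x + t *\<^sub>R y) - \<phi> x) + (\<phi> (x + t *\<^sub>R (-y')) - \<phi> x))"
    unfolding trunc_int_def Lphi_def by (simp add: algebra_simps)
  also have "\<dots> = J a y + J a (-y')"
    unfolding J_def by (rule set_integral_add(2)[OF int_J[OF assms] int_J[OF assms]])
  finally show ?thesis .
qed

lemma key:
  assumes dim: "DIM('a) \<ge> 2" and v: "norm v = 1" and w: "norm w = 1" and eps: "0 < \<epsilon>" "\<epsilon> < \<eta>"
  shows "(g x \<bullet> (v - w)) * (Cs s * (\<epsilon> powr (1 - 2 * s) - \<eta> powr (1 - 2 * s)) / (2 * s - 1))
     - 2 * Cx * norm (v - w) * (Cs s * (\<eta> powr (2 - 2 * s) - \<epsilon> powr (2 - 2 * s)) / (2 - 2 * s))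
     - 2 * om (norm (v - w)) * (Cs s * \<eta> powr (- 2 * s) / (2 * s) + Cs s * \<eta> powr (1 - 2 * s) / (2 * s - 1))
     \<le> J \<epsilon> v - J \<epsilon> w"
proof -
  let ?D = "\<lambda>t. \<phi> (x + t *\<^sub>R v) - \<phi> (x + t *\<^sub>R w)"
  define a where "a = norm (v - w)"
  define c where "c = g x \<bullet> (v - w)"
  have a0: "0 \<le> a" by (simp add: a_def)
  have intD: "set_integrable (mu_s s) {\<epsilon>..} ?D" by (rule int_diff[OF eps(1)])
  have e1: "1 \<noteq> 2 * s" "2 \<noteq> 2 * s" using s1 s2 by auto
  note P1 = pow_int_fin[OF s1 s2 eps(1) less_imp_le[OF eps(2)] e1(1)]
  note P2 = pow_int_fin[OF s1 s2 eps(1) less_imp_le[OF eps(2)] e1(2)]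
  note T0 = pow_int_tail[OF s1 s2 eta, of 0] and T1 = pow_int_tail[OF s1 s2 eta, of 1]
  have split: "{\<epsilon>..} = {\<epsilon>..\<eta>} \<union> {\<eta><..}" using eps by auto
  have intD1: "set_integrable (mu_s s) {\<epsilon>..\<eta>} ?D" by (rule set_integrable_subset[OF intD]) auto
  have intD2: "set_integrable (mu_s s) {\<eta><..} ?D" by (rule set_integrable_subset[OF intD]) (use eps in auto)
  have "J \<epsilon> v - J \<epsilon> w = (LINT t:{\<epsilon>..\<eta>}|mu_s s. ?D t) + (LINT t:{\<eta><..}|mu_s s. ?D t)"
    unfolding J_diff[OF eps(1)] split by (rule set_integral_Un[OF _ intD1 intD2]) auto
  moreover have "c * (Cs s * (\<epsilon> powr (1 - 2 * s) - \<eta> powr (1 - 2 * s)) / (2 * s - 1))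
     - 2 * Cx * a * (Cs s * (\<eta> powr (2 - 2 * s) - \<epsilon> powr (2 - 2 * s)) / (2 - 2 * s))
     \<le> (LINT t:{\<epsilon>..\<eta>}|mu_s s. ?D t)"
  proof -
    have "(LINT t:{\<epsilon>..\<eta>}|mu_s s. c * t powr 1 - 2 * Cx * a * t powr 2) \<le> (LINT t:{\<epsilon>..\<eta>}|mu_s s. ?D t)"
    proof (rule set_integral_mono[OF _ intD1])
      show "set_integrable (mu_s s) {\<epsilon>..\<eta>} (\<lambda>t. c * t powr 1 - 2 * Cx * a * t powr 2)"
        using P1(1) P2(1) by (intro set_integral_diff(1) set_integrable_mult_right) auto
      fix t assume t: "t \<in> {\<epsilon>..\<eta>}"
      then have tp: "0 < t" using eps by simp
      have "\<bar>\<phi> (x + t *\<^sub>R v) - \<phi> (x + t *\<^sub>R w) - g x \<bullet> ((x + t *\<^sub>R v) - (x + t *\<^sub>R w))\<bar>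
          \<le> 2 * Cx * t * norm ((x + t *\<^sub>R v) - (x + t *\<^sub>R w))"
        using t tp v w by (intro first_order) (auto simp: dist_norm)
      moreover have "(x + t *\<^sub>R v) - (x + t *\<^sub>R w) = t *\<^sub>R (v - w)" by (simp add: algebra_simps)
      ultimately have "\<bar>?D t - t * c\<bar> \<le> 2 * Cx * t * (t * a)"
        using tp by (simp add: c_def a_def)
      then show "c * t powr 1 - 2 * Cx * a * t powr 2 \<le> ?D t"
        using tp by (simp add: power2_eq_square algebra_simps)
    qed
    moreover have "(LINT t:{\<epsilon>..\<eta>}|mu_s s. c * t powr 1 - 2 * Cx * a * t powr 2)
       = c * (Cs s * (\<epsilon> powr (1 - 2 * s) - \<eta> powr (1 - 2 * s)) / (2 * s - 1))
         - 2 * Cx * a * (Cs s * (\<eta> powr (2 - 2 * s) - \<epsilon> powr (2 - 2 * s)) / (2 - 2 * s))"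
    proof -
      have "(LINT t:{\<epsilon>..\<eta>}|mu_s s. c * t powr 1 - 2 * Cx * a * t powr 2)
         = c * (LINT t:{\<epsilon>..\<eta>}|mu_s s. t powr 1) - 2 * Cx * a * (LINT t:{\<epsilon>..\<eta>}|mu_s s. t powr 2)"
        using P1(1) P2(1) by (subst set_integral_diff(2)) auto
      also have "\<dots> = c * (Cs s * (\<eta> powr (1 - 2 * s) - \<epsilon> powr (1 - 2 * s)) / (1 - 2 * s))
         - 2 * Cx * a * (Cs s * (\<eta> powr (2 - 2 * s) - \<epsilon> powr (2 - 2 * s)) / (2 - 2 * s))"
        by (simp only: P1(2) P2(2))
      also have "Cs s * (\<eta> powr (1 - 2 * s) - \<epsilon> powr (1 - 2 * s)) / (1 - 2 * s)
          = Cs s * (\<epsilon> powr (1 - 2 * s) - \<eta> powr (1 - 2 * s)) / (2 * s - 1)"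
        using e1 by (simp add: field_simps)
      finally show ?thesis .
    qed
    ultimately show ?thesis by simp
  qed
  moreover have "- 2 * om a * (Cs s * \<eta> powr (- 2 * s) / (2 * s) + Cs s * \<eta> powr (1 - 2 * s) / (2 * s - 1))
     \<le> (LINT t:{\<eta><..}|mu_s s. ?D t)"
  proof -
    have i0: "set_integrable (mu_s s) {\<eta><..} (\<lambda>t. t powr 0)" using T0(1) s1 by (subst mu_set_int_oc) auto
    have i1: "set_integrable (mu_s s) {\<eta><..} (\<lambda>t. t powr 1)" using T1(1) s1 by (subst mu_set_int_oc) auto
    have "(LINT t:{\<eta><..}|mu_s s. - (2 * om a) * t powr 0 - 2 * om a * t powr 1) \<le> (LINT t:{\<eta><..}|mu_s s. ?D t)"
    proof (rule set_integral_mono[OF _ intD2])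
      show "set_integrable (mu_s s) {\<eta><..} (\<lambda>t. - (2 * om a) * t powr 0 - 2 * om a * t powr 1)"
        using i0 i1 by (intro set_integral_diff(1) set_integrable_mult_right) auto
      fix t assume t: "t \<in> {\<eta><..}"
      then have tp: "0 < t" "\<eta> < t" using eta by auto
      have "\<bar>?D t\<bar> \<le> 2 * (1 + t) * om a"
        unfolding a_def by (rule chain_bound[OF dim v w tp(2)])
      then show "- (2 * om a) * t powr 0 - 2 * om a * t powr 1 \<le> ?D t"
        using tp by (simp add: algebra_simps)
    qed
    moreover have "(LINT t:{\<eta><..}|mu_s s. - (2 * om a) * t powr 0 - 2 * om a * t powr 1)
        = - 2 * om a * (Cs s * \<eta> powr (- 2 * s) / (2 * s) + Cs s * \<eta> powr (1 - 2 * s) / (2 * s - 1))"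
    proof -
      have "(LINT t:{\<eta><..}|mu_s s. - (2 * om a) * t powr 0 - 2 * om a * t powr 1)
          = - (2 * om a) * (LINT t:{\<eta><..}|mu_s s. t powr 0) - 2 * om a * (LINT t:{\<eta><..}|mu_s s. t powr 1)"
      proof -
        have m0: "set_integrable (mu_s s) {\<eta><..} (\<lambda>t. (- (2 * om a)) * t powr 0)"
          by (rule set_integrable_mult_right) (rule i0)
        have m1: "set_integrable (mu_s s) {\<eta><..} (\<lambda>t. (2 * om a) * t powr 1)"
          by (rule set_integrable_mult_right) (rule i1)
        show ?thesis by (subst set_integral_diff(2)[OF m0 m1]) (simp only: set_integral_mult_right)
      qed
      also have "\<dots> = - (2 * om a) * (Cs s * \<eta> powr (0 - 2 * s) / (2 * s - 0)) - 2 * om a * (Cs s * \<eta> powr (1 - 2 * s) / (2 * s - 1))"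
        using T0(2) T1(2) s1 by (simp add: mu_set_int_oc(2))
      finally show ?thesis by (simp add: algebra_simps)
    qed
    ultimately show ?thesis by simp
  qed
  ultimately show ?thesis by (simp add: a_def c_def)
qed

end

lemma powr_at_right_top:
  assumes "\<alpha> < 0"
  shows "filterlim (\<lambda>d::real. d powr \<alpha>) at_top (at_right 0)"
proof -
  have "((\<lambda>d::real. d powr (-\<alpha>)) \<longlongrightarrow> 0) (at_right 0)"
  proof (rule tendsto_zero_powrI[OF tendsto_ident_at tendsto_const])
    show "eventually (\<lambda>d::real. 0 \<le> d) (at_right 0)"
      using eventually_at_right_less[of "0::real"] by eventually_elim simp
  qed (use assms in auto)
  moreover have "eventually (\<lambda>d::real. 0 < d powr (-\<alpha>)) (at_right 0)"
    using eventually_at_right_less[of "0::real"] by eventually_elim simp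
  ultimately have "filterlim (\<lambda>d::real. inverse (d powr (-\<alpha>))) at_top (at_right 0)"
    by (rule filterlim_inverse_at_top)
  moreover have ev: "eventually (\<lambda>d::real. inverse (d powr (-\<alpha>)) = d powr \<alpha>) (at_right 0)"
    using eventually_at_right_less[of "0::real"] by eventually_elim (simp add: powr_minus)
  ultimately show ?thesis using filterlim_cong[OF refl refl ev] by simp
qed

context cor begin

lemma div_top:
  assumes v: "norm v = 1" and w: "norm w = 1" and c: "0 < g x \<bullet> (v - w)"
  shows "filterlim (\<lambda>\<delta>. J \<delta> v - J \<delta> w) at_top (at_right 0)"
proof -
  let ?D = "\<lambda>t. \<phi> (x + t *\<^sub>R v) - \<phi> (x + t *\<^sub>R w)"
  define a where "a = norm (v - w)"
  define c where "c = g x \<bullet> (v - w)"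
  have a0: "0 \<le> a" by (simp add: a_def)
  have c0: "0 < c" using assms by (simp add: c_def)
  have Cxa: "0 \<le> Cx * a" using Cx_nonneg a0 by simp
  define r where "r = min \<eta> (c / (4 * (Cx * a) + 1))"
  have r0: "0 < r" using eta c0 Cxa by (simp add: r_def)
  have rle: "r \<le> \<eta>" by (simp add: r_def)
  have rc: "2 * Cx * a * r \<le> c / 2"
  proof -
    have "2 * (Cx * a) * r \<le> 2 * (Cx * a) * (c / (4 * (Cx * a) + 1))"
      using Cxa by (intro mult_left_mono) (auto simp: r_def)
    also have "\<dots> \<le> c / 2" using Cxa c0 by (simp add: field_simps)
    finally show ?thesis by (simp add: mult.assoc)
  qed
  define K where "K = (LINT t:{r<..}|mu_s s. ?D t)"
  have e1: "1 \<noteq> 2 * s" using s1 by auto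
  define L where "L d = K + (c / 2) * (Cs s * (r powr (1 - 2 * s) - d powr (1 - 2 * s)) / (1 - 2 * s))" for d
  have lower: "L d \<le> J d v - J d w" if d: "0 < d" "d < r" for d
  proof -
    have intD: "set_integrable (mu_s s) {d..} ?D" by (rule int_diff[OF d(1)])
    have split: "{d..} = {d..r} \<union> {r<..}" using d by auto
    have intD1: "set_integrable (mu_s s) {d..r} ?D" by (rule set_integrable_subset[OF intD]) auto
    have intD2: "set_integrable (mu_s s) {r<..} ?D" by (rule set_integrable_subset[OF intD]) (use d in auto)
    have eq: "J d v - J d w = (LINT t:{d..r}|mu_s s. ?D t) + K"
      unfolding J_diff[OF d(1)] split K_def by (rule set_integral_Un[OF _ intD1 intD2]) auto
    note P1 = pow_int_fin[OF s1 s2 d(1) less_imp_le[OF d(2)] e1]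
    have "(LINT t:{d..r}|mu_s s. (c / 2) * t powr 1) \<le> (LINT t:{d..r}|mu_s s. ?D t)"
    proof (rule set_integral_mono[OF _ intD1])
      show "set_integrable (mu_s s) {d..r} (\<lambda>t. (c / 2) * t powr 1)"
        by (rule set_integrable_mult_right) (rule P1(1))
      fix t assume t: "t \<in> {d..r}"
      then have tp: "0 < t" using d by simp
      have "\<bar>\<phi> (x + t *\<^sub>R v) - \<phi> (x + t *\<^sub>R w) - g x \<bullet> ((x + t *\<^sub>R v) - (x + t *\<^sub>R w))\<bar>
          \<le> 2 * Cx * t * norm ((x + t *\<^sub>R v) - (x + t *\<^sub>R w))"
        using t tp v w rle by (intro first_order) (auto simp: dist_norm)
      moreover have "(x + t *\<^sub>R v) - (x + t *\<^sub>R w) = t *\<^sub>R (v - w)" by (simp add: algebra_simps)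
      ultimately have h1: "\<bar>?D t - t * c\<bar> \<le> 2 * Cx * t * (t * a)"
        using tp by (simp add: c_def a_def)
      have h2: "2 * Cx * t * (t * a) \<le> t * (c / 2)"
      proof -
        have "2 * (Cx * a) * t \<le> 2 * (Cx * a) * r" using t Cxa by (intro mult_left_mono) auto
        then have "2 * Cx * a * t \<le> c / 2" using rc by (simp add: mult.assoc)
        then have "t * (2 * Cx * a * t) \<le> t * (c / 2)" using tp by (intro mult_left_mono) auto
        then show ?thesis by (simp add: algebra_simps)
      qed
      have h3: "t * c - 2 * Cx * t * (t * a) \<le> ?D t" using h1 by (simp add: abs_le_iff)
      have h4: "(c / 2) * t powr 1 = t * c - t * (c / 2)" using tp by (simp add: algebra_simps)
      show "(c / 2) * t powr 1 \<le> ?D t" using h2 h3 h4 by linarith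
    qed
    then have "(c / 2) * (Cs s * (r powr (1 - 2 * s) - d powr (1 - 2 * s)) / (1 - 2 * s)) \<le> (LINT t:{d..r}|mu_s s. ?D t)"
      by (simp only: set_integral_mult_right P1(2))
    then show ?thesis using eq by (simp add: L_def)
  qed
  have "filterlim L at_top (at_right 0)"
  proof -
    have pos: "0 < c / 2 * Cs s / (2 * s - 1)" using c0 Cs_pos[OF s1 s2] s1 by simp
    have "filterlim (\<lambda>d. (K - c / 2 * Cs s / (2 * s - 1) * r powr (1 - 2 * s)) + (c / 2 * Cs s / (2 * s - 1)) * d powr (1 - 2 * s)) at_top (at_right 0)"
      by (intro filterlim_tendsto_add_at_top[OF tendsto_const] filterlim_tendsto_pos_mult_at_top[OF tendsto_const pos]
          powr_at_right_top) (use s1 in simp)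
    moreover have "(K - c / 2 * Cs s / (2 * s - 1) * r powr (1 - 2 * s)) + (c / 2 * Cs s / (2 * s - 1)) * d powr (1 - 2 * s) = L d" for d
    proof -
      have q: "1 - 2 * s = - (2 * s - 1)" by simp
      have "Cs s * (r powr (1 - 2 * s) - d powr (1 - 2 * s)) / (1 - 2 * s)
          = (Cs s * (d powr (1 - 2 * s) - r powr (1 - 2 * s))) / (2 * s - 1)"
      proof -
        have gen: "\<And>X::real. X / (1 - 2 * s) = (- X) / (2 * s - 1)" by (metis minus_diff_eq minus_divide_divide)
        show ?thesis by (subst gen) (simp add: algebra_simps)
      qed
      also have "\<dots> = Cs s / (2 * s - 1) * d powr (1 - 2 * s) - Cs s / (2 * s - 1) * r powr (1 - 2 * s)"
        by (simp add: diff_divide_distrib right_diff_distrib)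
      finally have E: "Cs s * (r powr (1 - 2 * s) - d powr (1 - 2 * s)) / (1 - 2 * s)
         = Cs s / (2 * s - 1) * d powr (1 - 2 * s) - Cs s / (2 * s - 1) * r powr (1 - 2 * s)" .
      show ?thesis unfolding L_def E by (simp add: algebra_simps)
    qed
    ultimately show ?thesis by simp
  qed
  moreover have "eventually (\<lambda>d. L d \<le> J d v - J d w) (at_right 0)"
    using eventually_at_right_real[OF r0] by eventually_elim (auto intro: lower)
  ultimately show ?thesis by (rule filterlim_at_top_mono)
qed

end

context cor begin

lemma F0_lim:
  assumes u: "norm u = 1" and eps: "0 < \<epsilon>" "\<epsilon> \<le> \<eta>"
  shows "\<exists>F. ((\<lambda>\<delta>. J \<delta> u + J \<delta> (-u)) \<longlongrightarrow> F) (at_right 0) \<and>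
     \<bar>F - (J \<epsilon> u + J \<epsilon> (-u))\<bar> \<le> 2 * Cx * (Cs s * \<epsilon> powr (2 - 2 * s) / (2 - 2 * s))"
proof -
  define Q where "Q t = \<phi> (x + t *\<^sub>R u) + \<phi> (x + t *\<^sub>R (-u)) - 2 * \<phi> x" for t
  have Qm[measurable]: "Q \<in> borel_measurable borel" unfolding Q_def by measurable
  have Qb: "\<bar>Q t\<bar> \<le> 2 * Cx * t powr 2" if "0 < t" "t \<le> \<eta>" for t
    using second_order[OF u, of t] that by (simp add: Q_def)
  have Jsum: "J d u + J d (-u) = (LINT t:{d..}|mu_s s. Q t)" if "0 < d" for d
  proof -
    have "J d u + J d (-u) = (LINT t:{d..}|mu_s s. (\<phi> (x + t *\<^sub>R u) - \<phi> x) + (\<phi> (x + t *\<^sub>R (-u)) - \<phi> x))"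
      unfolding J_def by (rule set_integral_add(2)[symmetric, OF int_J[OF that] int_J[OF that]])
    then show ?thesis by (simp add: Q_def algebra_simps)
  qed
  have intQ: "set_integrable (mu_s s) {d..} Q" if "0 < d" for d
  proof -
    have "set_integrable (mu_s s) {d..} (\<lambda>t. (\<phi> (x + t *\<^sub>R u) - \<phi> x) + (\<phi> (x + t *\<^sub>R (-u)) - \<phi> x))"
      by (rule set_integral_add(1)[OF int_J[OF that] int_J[OF that]])
    then show ?thesis by (simp add: Q_def[abs_def] algebra_simps)
  qed
  have e2: "2 * s < 2" "2 \<noteq> 2 * s" using s2 by auto
  have intQ0: "set_integrable (mu_s s) {0<..\<epsilon>} Q"
  proof (rule set_integrable_bound)
    show "set_integrable (mu_s s) {0<..\<epsilon>} (\<lambda>t. 2 * Cx * t powr 2)"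
      by (rule set_integrable_mult_right) (rule pow_int_zero[OF s1 s2 eps(1)], use s2 in simp)
    show "set_borel_measurable (mu_s s) {0<..\<epsilon>} Q" unfolding set_borel_measurable_def by measurable
    show "AE t in mu_s s. t \<in> {0<..\<epsilon>} \<longrightarrow> norm (Q t) \<le> norm (2 * Cx * t powr 2)"
    proof (rule AE_I2, intro impI)
      fix t assume "t \<in> {0<..\<epsilon>}"
      then have t: "0 < t" "t \<le> \<eta>" using eps by auto
      have "0 \<le> 2 * Cx * t powr 2" using Cx_nonneg by simp
      then show "norm (Q t) \<le> norm (2 * Cx * t powr 2)" using Qb[OF t] by simp
    qed
  qed
  define F where "F = (LINT t:{0<..\<epsilon>}|mu_s s. Q t) + (LINT t:{\<epsilon><..}|mu_s s. Q t)"
  have tl: "((\<lambda>d. LINT t:{d..\<epsilon>}|mu_s s. Q t) \<longlongrightarrow> (LINT t:{0<..\<epsilon>}|mu_s s. Q t)) (at_right 0)"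
    by (rule tendsto_set_lebesgue_integral_at_right[OF eps(1) _ intQ0]) simp
  have spl: "(LINT t:{d..}|mu_s s. Q t) = (LINT t:{d..\<epsilon>}|mu_s s. Q t) + (LINT t:{\<epsilon><..}|mu_s s. Q t)"
    if d: "0 < d" "d < \<epsilon>" for d
  proof -
    have split: "{d..} = {d..\<epsilon>} \<union> {\<epsilon><..}" using d by auto
    have i1: "set_integrable (mu_s s) {d..\<epsilon>} Q" by (rule set_integrable_subset[OF intQ[OF d(1)]]) auto
    have i2: "set_integrable (mu_s s) {\<epsilon><..} Q" by (rule set_integrable_subset[OF intQ[OF d(1)]]) (use d in auto)
    show ?thesis unfolding split by (rule set_integral_Un[OF _ i1 i2]) auto
  qed
  have lim: "((\<lambda>\<delta>. J \<delta> u + J \<delta> (-u)) \<longlongrightarrow> F) (at_right 0)"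
  proof -
    have lim1: "((\<lambda>d. (LINT t:{d..\<epsilon>}|mu_s s. Q t) + (LINT t:{\<epsilon><..}|mu_s s. Q t)) \<longlongrightarrow> F) (at_right 0)"
      unfolding F_def by (intro tendsto_add tl tendsto_const)
    have ev: "eventually (\<lambda>d. (LINT t:{d..\<epsilon>}|mu_s s. Q t) + (LINT t:{\<epsilon><..}|mu_s s. Q t) = J d u + J d (-u)) (at_right 0)"
      using eventually_at_right_real[OF eps(1)] by eventually_elim (simp add: Jsum spl)
    show ?thesis by (rule tendsto_cong[OF ev, THEN iffD1, OF lim1])
  qed
  have Reps: "J \<epsilon> u + J \<epsilon> (-u) = (LINT t:{\<epsilon><..}|mu_s s. Q t)"
    using Jsum[OF eps(1)] mu_set_int_oc(2)[OF Qm, of s \<epsilon>] by simp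
  define bd where "bd = 2 * Cx * (Cs s * \<epsilon> powr (2 - 2 * s) / (2 - 2 * s))"
  have bnd: "\<bar>LINT t:{d..\<epsilon>}|mu_s s. Q t\<bar> \<le> bd" if d: "0 < d" "d < \<epsilon>" for d
  proof -
    note P2 = pow_int_fin[OF s1 s2 d(1) less_imp_le[OF d(2)] e2(2)]
    have i1: "set_integrable (mu_s s) {d..\<epsilon>} Q" by (rule set_integrable_subset[OF intQ[OF d(1)]]) auto
    have i2: "set_integrable (mu_s s) {d..\<epsilon>} (\<lambda>t. 2 * Cx * t powr 2)"
      by (rule set_integrable_mult_right) (rule P2(1))
    have i3: "set_integrable (mu_s s) {d..\<epsilon>} (\<lambda>t. (- (2 * Cx)) * t powr 2)"
      by (rule set_integrable_mult_right) (rule P2(1))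
    have val: "(LINT t:{d..\<epsilon>}|mu_s s. 2 * Cx * t powr 2) = 2 * Cx * (Cs s * (\<epsilon> powr (2 - 2 * s) - d powr (2 - 2 * s)) / (2 - 2 * s))"
      by (simp only: set_integral_mult_right P2(2))
    have val': "(LINT t:{d..\<epsilon>}|mu_s s. (- (2 * Cx)) * t powr 2) = - (2 * Cx * (Cs s * (\<epsilon> powr (2 - 2 * s) - d powr (2 - 2 * s)) / (2 - 2 * s)))"
      by (simp only: set_integral_mult_right P2(2))
    have up: "(LINT t:{d..\<epsilon>}|mu_s s. Q t) \<le> (LINT t:{d..\<epsilon>}|mu_s s. 2 * Cx * t powr 2)"
      by (rule set_integral_mono[OF i1 i2]) (use Qb eps d in \<open>auto simp: abs_le_iff\<close>)
    have lo: "(LINT t:{d..\<epsilon>}|mu_s s. (- (2 * Cx)) * t powr 2) \<le> (LINT t:{d..\<epsilon>}|mu_s s. Q t)"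
    proof (rule set_integral_mono[OF i3 i1])
      fix t assume "t \<in> {d..\<epsilon>}"
      then have "0 < t" "t \<le> \<eta>" using d eps by auto
      from Qb[OF this] show "(- (2 * Cx)) * t powr 2 \<le> Q t" by (simp add: abs_le_iff)
    qed
    have "2 * Cx * (Cs s * (\<epsilon> powr (2 - 2 * s) - d powr (2 - 2 * s)) / (2 - 2 * s)) \<le> bd"
    proof -
      have "Cs s * (\<epsilon> powr (2 - 2 * s) - d powr (2 - 2 * s)) / (2 - 2 * s) \<le> Cs s * \<epsilon> powr (2 - 2 * s) / (2 - 2 * s)"
        using Cs_pos[OF s1 s2] s2 by (intro divide_right_mono mult_left_mono) auto
      then show ?thesis unfolding bd_def using Cx_nonneg by (intro mult_left_mono) auto
    qed
    then show ?thesis using up lo val val' by (simp add: abs_le_iff)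
  qed
  have "\<bar>LINT t:{0<..\<epsilon>}|mu_s s. Q t\<bar> \<le> bd"
  proof (rule tendsto_upperbound[OF tendsto_rabs[OF tl]])
    show "eventually (\<lambda>d. \<bar>LINT t:{d..\<epsilon>}|mu_s s. Q t\<bar> \<le> bd) (at_right 0)"
      using eventually_at_right_real[OF eps(1)] by eventually_elim (auto intro: bnd)
  qed (simp add: trivial_limit_at_right_real)
  then show ?thesis using lim Reps by (intro exI[of _ F]) (simp add: F_def bd_def)
qed

end

context cor begin

lemma G_bound:
  assumes eps: "0 < \<epsilon>" "\<epsilon> < \<eta>" and a: "0 \<le> a" "a \<le> 2"
  shows "norm (g x) * a\<^sup>2 / 2 * (Cs s * (\<epsilon> powr (1 - 2 * s) - \<eta> powr (1 - 2 * s)) / (2 * s - 1))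
     - 2 * Cx * a * (Cs s * (\<eta> powr (2 - 2 * s) - \<epsilon> powr (2 - 2 * s)) / (2 - 2 * s))
     - 2 * om a * (Cs s * \<eta> powr (- 2 * s) / (2 * s) + Cs s * \<eta> powr (1 - 2 * s) / (2 * s - 1))
     \<ge> - (4 * cs s * s * Cx * (\<eta> powr (2 - 2 * s) - \<epsilon> powr (2 - 2 * s)) * A_eps s \<phi> x \<eta> (g x) Cx \<epsilon>
          + cs s * (1 - s) * (\<eta> powr (-2 * s) + (2 * s / (2 * s - 1)) * \<eta> powr (1 - 2 * s))
              * om (A_eps s \<phi> x \<eta> (g x) Cx \<epsilon>))"
proof -
  define np where "np = norm (g x)"
  define Cs' where "Cs' = Cs s"
  define E where "E = \<eta> powr (2 - 2 * s) - \<epsilon> powr (2 - 2 * s)"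
  define Dd where "Dd = \<epsilon> powr (1 - 2 * s) - \<eta> powr (1 - 2 * s)"
  define S where "S = ((2 * s - 1) / (2 * s)) * \<eta> powr (-2 * s) + \<eta> powr (1 - 2 * s)"
  define A where "A = A_eps s \<phi> x \<eta> (g x) Cx \<epsilon>"
  define X where "X = 16 * Cx / np * ((2 * s - 1) / (1 - s)) * (E / Dd)"
  define K where "K = {a \<in> {0..2}. a\<^sup>2 \<le> 8 * om a / np * S / Dd}"
  have np0: "0 < np" using p_nz by (simp add: np_def)
  have C0: "0 < Cs'" using Cs_pos[OF s1 s2] by (simp add: Cs'_def)
  have s3: "0 < 2 * s - 1" "0 < 1 - s" "0 < s" using s1 s2 by auto
  have "\<epsilon> powr (2 - 2 * s) \<le> \<eta> powr (2 - 2 * s)" using eps s2 by (intro powr_mono2) auto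
  then have E0: "0 \<le> E" unfolding E_def by simp
  have Dd0: "0 < Dd" unfolding Dd_def using eps s1 by (simp add: powr_less_mono2_neg)
  have S0: "0 < S" unfolding S_def using s3 eta by (intro add_pos_pos mult_pos_pos) auto
  have kap: "kappa_eps s \<phi> x \<eta> (g x) \<epsilon> = Sup K"
    unfolding kappa_eps_def K_def om_def np_def S_def Dd_def by simp
  have Aeq: "A = max X (Sup K)"
    unfolding A_def A_eps_def kap X_def np_def E_def Dd_def by simp
  have Kbdd: "bdd_above K" by (rule bdd_aboveI[of _ 2]) (auto simp: K_def)
  have K0: "0 \<in> K"
    using om_nonneg[of 0] np0 S0 Dd0 by (auto simp: K_def)
  have supK0: "0 \<le> Sup K" using cSup_upper[OF K0 Kbdd] .
  have A0: "0 \<le> A" using supK0 by (simp add: Aeq)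
  have omA: "0 \<le> om A" using om_nonneg[OF A0] .
  have Cx0: "0 \<le> Cx" by (rule Cx_nonneg)
  define I1 where "I1 = Cs' * Dd / (2 * s - 1)"
  define I2 where "I2 = Cs' * E / (2 - 2 * s)"
  define J01 where "J01 = Cs' * \<eta> powr (- 2 * s) / (2 * s) + Cs' * \<eta> powr (1 - 2 * s) / (2 * s - 1)"
  have I2_0: "0 \<le> I2" using C0 E0 s3 by (simp add: I2_def)
  have I1_0: "0 < I1" using C0 Dd0 s3 by (simp add: I1_def)
  have J01_0: "0 \<le> J01" using C0 s3 eta by (simp add: J01_def)
  have J01_S: "J01 = Cs' * S / (2 * s - 1)"
    using s3 by (simp add: J01_def S_def field_simps)
  have T1: "4 * cs s * s * Cx * E * A = 8 * Cx * A * I2"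
    using s3 by (simp add: cs_def I2_def Cs'_def field_simps)
  have T2: "cs s * (1 - s) * (\<eta> powr (-2 * s) + (2 * s / (2 * s - 1)) * \<eta> powr (1 - 2 * s)) = 2 * J01"
  proof -
    have c1: "cs s * (1 - s) = Cs' / s" using s3 by (simp add: cs_def Cs'_def field_simps)
    have c2: "Cs' / s * (2 * s / (2 * s - 1)) = 2 * (Cs' / (2 * s - 1))" using s3 by (simp add: field_simps)
    have "cs s * (1 - s) * (\<eta> powr (-2 * s) + (2 * s / (2 * s - 1)) * \<eta> powr (1 - 2 * s))
        = Cs' / s * \<eta> powr (-2 * s) + (Cs' / s * (2 * s / (2 * s - 1))) * \<eta> powr (1 - 2 * s)"
      unfolding c1 by (simp add: algebra_simps)
    also have "\<dots> = 2 * J01" unfolding c2 J01_def by (simp add: field_simps)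
    finally show ?thesis .
  qed
  have goal: "np * a\<^sup>2 / 2 * I1 - 2 * Cx * a * I2 - 2 * om a * J01 \<ge> - (8 * Cx * A * I2 + 2 * J01 * om A)"
  proof (cases "a \<le> A")
    case True
    have "2 * Cx * a * I2 \<le> 2 * Cx * A * I2" using True Cx0 I2_0 by (intro mult_right_mono mult_left_mono) auto
    moreover have "om a \<le> om A" using om_mono[OF a(1) True] .
    then have "2 * om a * J01 \<le> 2 * om A * J01" using J01_0 by (intro mult_right_mono) auto
    moreover have "0 \<le> np * a\<^sup>2 / 2 * I1" using np0 I1_0 by simp
    moreover have "0 \<le> Cx * A * I2" using Cx0 A0 I2_0 by simp
    ultimately show ?thesis by (simp add: algebra_simps)
  next
    case False
    then have aX: "X < a" and aK: "Sup K < a" by (auto simp: Aeq)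
    have apos: "0 < a" using aK supK0 by simp
    have "a \<notin> K" using aK cSup_upper[OF _ Kbdd] by force
    then have nK: "8 * om a / np * S / Dd < a\<^sup>2" using a by (auto simp: K_def)
    have h1: "2 * Cx * a * I2 \<le> np * a\<^sup>2 / 4 * I1"
    proof -
      define q where "q = 2 * s - 1"
      define m where "m = 1 - s"
      have q0: "0 < q" and m0: "0 < m" using s3 by (auto simp: q_def m_def)
      have I2': "I2 = Cs' * E / (2 * m)" by (simp add: I2_def m_def)
      have I1': "I1 = Cs' * Dd / q" by (simp add: I1_def q_def)
      have X': "X = 16 * Cx / np * (q / m) * (E / Dd)" by (simp add: X_def q_def m_def)
      have "X * (np * Dd * m) \<le> a * (np * Dd * m)"
        using aX np0 Dd0 m0 by (intro mult_right_mono) auto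
      moreover have "X * (np * Dd * m) = 16 * q * Cx * E"
        using np0 Dd0 m0 by (simp add: X' field_simps)
      ultimately have k1: "16 * q * Cx * E \<le> np * a * Dd * m" by (simp add: algebra_simps)
      have "0 \<le> q * Cx * E" using q0 Cx0 E0 by simp
      then have k2: "4 * q * Cx * E \<le> np * a * Dd * m" using k1 by simp
      have k3: "(a * Cs' / (4 * q * m)) * (4 * q * Cx * E) \<le> (a * Cs' / (4 * q * m)) * (np * a * Dd * m)"
        by (rule mult_left_mono[OF k2]) (use apos C0 q0 m0 in simp)
      have k4: "(a * Cs' / (4 * q * m)) * (4 * q * Cx * E) = 2 * Cx * a * I2"
        using q0 m0 by (simp add: I2' field_simps)
      have k5: "(a * Cs' / (4 * q * m)) * (np * a * Dd * m) = np * a\<^sup>2 / 4 * I1"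
        using q0 m0 by (simp add: I1' field_simps power2_eq_square)
      show ?thesis using k3 k4 k5 by simp
    qed
    have h2: "2 * om a * J01 \<le> np * a\<^sup>2 / 4 * I1"
    proof -
      have "8 * om a * S < a\<^sup>2 * np * Dd"
        using nK np0 Dd0 by (simp add: field_simps)
      then have "Cs' * (8 * om a * S) / (4 * (2 * s - 1)) \<le> Cs' * (a\<^sup>2 * np * Dd) / (4 * (2 * s - 1))"
        using C0 s3 by (intro divide_right_mono mult_left_mono) auto
      moreover have "Cs' * (8 * om a * S) / (4 * (2 * s - 1)) = 2 * om a * J01"
        using s3 by (simp add: J01_S field_simps)
      moreover have "Cs' * (a\<^sup>2 * np * Dd) / (4 * (2 * s - 1)) = np * a\<^sup>2 / 4 * I1"
        using s3 by (simp add: I1_def field_simps)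
      ultimately show ?thesis by linarith
    qed
    have "0 \<le> 8 * Cx * A * I2 + 2 * J01 * om A" using Cx0 A0 I2_0 J01_0 omA by simp
    then show ?thesis using h1 h2 by (simp add: algebra_simps)
  qed
  show ?thesis
    using goal T1 T2 unfolding np_def I1_def I2_def J01_def Cs'_def E_def Dd_def A_def
    by (simp add: algebra_simps)
qed

end

context cor begin

definition u where "u = g x /\<^sub>R norm (g x)"

lemma u_unit: "norm u = 1" using p_nz by (simp add: u_def)

lemma gx_u: "g x = norm (g x) *\<^sub>R u" using p_nz by (simp add: u_def)

lemma ip_u: assumes "norm y = 1" shows "g x \<bullet> (u - y) = norm (g x) * (norm (u - y))\<^sup>2 / 2"
proof -
  have uu: "u \<bullet> u = 1" "y \<bullet> y = 1" using u_unit assms by (simp_all add: norm_eq_1)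
  have "(norm (u - y))\<^sup>2 = 2 - 2 * (u \<bullet> y)"
    by (simp add: power2_norm_eq_inner inner_diff_left inner_diff_right uu inner_commute)
  moreover have "g x \<bullet> (u - y) = norm (g x) * (1 - u \<bullet> y)"
    by (subst gx_u) (simp add: inner_diff_right uu algebra_simps)
  ultimately show ?thesis by simp
qed

lemma ip_pos: assumes "norm y = 1" "y \<noteq> u" shows "0 < g x \<bullet> (u - y)"
proof -
  have "0 < norm (u - y)" using assms(2) by simp
  then have "0 < norm (g x) * (norm (u - y))\<^sup>2 / 2" using p_nz by simp
  then show ?thesis using ip_u[OF assms(1)] by simp
qed

lemma full_int_eq:
  fixes L :: ereal
  assumes lim: "((\<lambda>d. ereal (J d y + J d (-y'))) \<longlongrightarrow> L) (at_right 0)"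
  shows "full_int s \<phi> x y y' = L"
proof -
  have ev: "eventually (\<lambda>d. ereal (J d y + J d (-y')) = ereal (trunc_int s \<phi> x y y' d)) (at_right 0)"
    using eventually_at_right_less[of "0::real"] by eventually_elim (simp add: trunc_split)
  have "((\<lambda>d. ereal (trunc_int s \<phi> x y y' d)) \<longlongrightarrow> L) (at_right 0)"
    by (rule tendsto_cong[OF ev, THEN iffD1, OF lim])
  then show ?thesis unfolding full_int_def by (intro tendsto_Lim) (simp_all add: trivial_limit_at_right_real)
qed

lemma Lfull_val:
  assumes F: "((\<lambda>\<delta>. J \<delta> u + J \<delta> (-u)) \<longlongrightarrow> F0) (at_right 0)"
  shows "Lfull s \<phi> x = ereal F0"
proof -
  have fuu: "full_int s \<phi> x u u = ereal F0"
    by (rule full_int_eq) (use F in simp)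
  have fu_inf: "full_int s \<phi> x u y' = \<infinity>" if y': "norm y' = 1" "y' \<noteq> u" for y'
  proof (rule full_int_eq)
    have "filterlim (\<lambda>d. J d (-y') - J d (-u)) at_top (at_right 0)"
      by (rule div_top) (use y' u_unit ip_pos[OF y'] in \<open>simp_all add: algebra_simps\<close>)
    then have "filterlim (\<lambda>d. (J d u + J d (-u)) + (J d (-y') - J d (-u))) at_top (at_right 0)"
      by (rule filterlim_tendsto_add_at_top[OF F])
    then show "((\<lambda>d. ereal (J d u + J d (-y'))) \<longlongrightarrow> \<infinity>) (at_right 0)"
      unfolding tendsto_PInfty_eq_at_top[symmetric] by (simp add: algebra_simps)
  qed
  have fy_minf: "full_int s \<phi> x y u = -\<infinity>" if y: "norm y = 1" "y \<noteq> u" for y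
  proof (rule full_int_eq)
    have "filterlim (\<lambda>d. J d u - J d y) at_top (at_right 0)"
      by (rule div_top[OF u_unit y(1) ip_pos[OF y]])
    then have Z: "filterlim (\<lambda>d. - (J d u + J d (-u)) + (J d u - J d y)) at_top (at_right 0)"
      by (rule filterlim_tendsto_add_at_top[OF tendsto_minus[OF F]])
    show "((\<lambda>d. ereal (J d y + J d (-u))) \<longlongrightarrow> -\<infinity>) (at_right 0)"
      unfolding tendsto_MInfty
    proof
      fix r :: real
      have "eventually (\<lambda>d. - r < - (J d u + J d (-u)) + (J d u - J d y)) (at_right 0)"
        using Z by (simp add: filterlim_at_top_dense)
      then show "eventually (\<lambda>d. ereal (J d y + J d (-u)) < ereal r) (at_right 0)"
        by eventually_elim (simp add: algebra_simps)
    qed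
  qed
  have INFu: "(INF y'\<in>sphere 0 1. full_int s \<phi> x u y') = ereal F0"
  proof (rule antisym)
    show "(INF y'\<in>sphere 0 1. full_int s \<phi> x u y') \<le> ereal F0"
      using u_unit fuu by (metis INF_lower mem_sphere_0)
    show "ereal F0 \<le> (INF y'\<in>sphere 0 1. full_int s \<phi> x u y')"
    proof (rule INF_greatest)
      fix y' assume "y' \<in> sphere (0::'a) 1"
      then have "norm y' = 1" by simp
      then show "ereal F0 \<le> full_int s \<phi> x u y'"
        using fuu fu_inf by (cases "y' = u") auto
    qed
  qed
  show ?thesis unfolding Lfull_def
  proof (rule antisym)
    show "(SUP y\<in>sphere 0 1. INF y'\<in>sphere 0 1. full_int s \<phi> x y y') \<le> ereal F0"
    proof (rule SUP_least)
      fix y assume "y \<in> sphere (0::'a) 1"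
      then have y: "norm y = 1" by simp
      show "(INF y'\<in>sphere 0 1. full_int s \<phi> x y y') \<le> ereal F0"
      proof (cases "y = u")
        case True then show ?thesis using INFu by simp
      next
        case False
        have "(INF y'\<in>sphere 0 1. full_int s \<phi> x y y') \<le> full_int s \<phi> x y u"
          using u_unit by (intro INF_lower) simp
        then show ?thesis using fy_minf[OF y False] by simp
      qed
    qed
    show "ereal F0 \<le> (SUP y\<in>sphere 0 1. INF y'\<in>sphere 0 1. full_int s \<phi> x y y')"
      using INFu u_unit by (metis SUP_upper mem_sphere_0)
  qed
qed

end

context cor begin

definition Bp where "Bp \<epsilon> = 4 * cs s * s * Cx * (\<eta> powr (2 - 2 * s) - \<epsilon> powr (2 - 2 * s)) * A_eps s \<phi> x \<eta> (g x) Cx \<epsilon>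
          + cs s * (1 - s) * (\<eta> powr (-2 * s) + (2 * s / (2 * s - 1)) * \<eta> powr (1 - 2 * s))
              * om (A_eps s \<phi> x \<eta> (g x) Cx \<epsilon>)"

lemma comp:
  assumes dim: "DIM('a) \<ge> 2" and v: "norm v = 1" and w: "norm w = 1" and eps: "0 < \<epsilon>" "\<epsilon> < \<eta>"
    and ip: "g x \<bullet> (v - w) = norm (g x) * (norm (v - w))\<^sup>2 / 2"
  shows "- Bp \<epsilon> \<le> J \<epsilon> v - J \<epsilon> w"
proof -
  have a2: "norm (v - w) \<le> 2" using norm_triangle_ineq4[of v w] v w by simp
  note G = G_bound[OF eps norm_ge_zero a2]
  note Kk = key[OF dim v w eps]
  show ?thesis using G Kk unfolding ip Bp_def by linarith
qed

lemma Bp_nonneg: assumes eps: "0 < \<epsilon>" "\<epsilon> < \<eta>" shows "0 \<le> Bp \<epsilon>"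
proof -
  note G = G_bound[OF eps order_refl zero_le_numeral]
  have "0 \<le> om 0" by (rule om_nonneg) simp
  moreover have "0 \<le> Cs s * \<eta> powr (- 2 * s) / (2 * s) + Cs s * \<eta> powr (1 - 2 * s) / (2 * s - 1)"
    using Cs_pos[OF s1 s2] s1 by (intro add_nonneg_nonneg divide_nonneg_pos) auto
  ultimately have "0 \<le> 2 * om 0 * (Cs s * \<eta> powr (- 2 * s) / (2 * s) + Cs s * \<eta> powr (1 - 2 * s) / (2 * s - 1))"
    by simp
  then show ?thesis using G by (simp add: Bp_def)
qed

lemma Leps_eq: assumes "0 < \<epsilon>"
  shows "Leps s \<epsilon> \<phi> x = (SUP y\<in>sphere 0 1. INF y'\<in>sphere 0 1. ereal (J \<epsilon> y + J \<epsilon> (-y')))"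
  unfolding Leps_def using trunc_split[OF assms] by simp

lemma Leps_bounds:
  assumes eps: "0 < \<epsilon>" "\<epsilon> < \<eta>"
  shows "ereal (J \<epsilon> u + J \<epsilon> (-u) - Bp \<epsilon>) \<le> Leps s \<epsilon> \<phi> x \<and> Leps s \<epsilon> \<phi> x \<le> ereal (J \<epsilon> u + J \<epsilon> (-u) + Bp \<epsilon>)"
proof (cases "DIM('a) \<ge> 2")
  case True
  have lo: "ereal (J \<epsilon> u + J \<epsilon> (-u) - Bp \<epsilon>) \<le> Leps s \<epsilon> \<phi> x"
  proof -
    have "ereal (J \<epsilon> u + J \<epsilon> (-u) - Bp \<epsilon>) \<le> (INF y'\<in>sphere 0 1. ereal (J \<epsilon> u + J \<epsilon> (-y')))"
    proof (rule INF_greatest)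
      fix y' assume "y' \<in> sphere (0::'a) 1"
      then have y': "norm y' = 1" by simp
      have "g x \<bullet> (- y' - - u) = norm (g x) * (norm (- y' - - u))\<^sup>2 / 2"
        using ip_u[OF y'] by (simp add: norm_minus_commute)
      from comp[OF True _ _ eps this] y' u_unit
      show "ereal (J \<epsilon> u + J \<epsilon> (-u) - Bp \<epsilon>) \<le> ereal (J \<epsilon> u + J \<epsilon> (-y'))" by simp
    qed
    also have "\<dots> \<le> Leps s \<epsilon> \<phi> x"
      unfolding Leps_eq[OF eps(1)] using u_unit by (intro SUP_upper2[of u]) auto
    finally show ?thesis .
  qed
  have up: "Leps s \<epsilon> \<phi> x \<le> ereal (J \<epsilon> u + J \<epsilon> (-u) + Bp \<epsilon>)"
    unfolding Leps_eq[OF eps(1)]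
  proof (rule SUP_least)
    fix y assume "y \<in> sphere (0::'a) 1"
    then have y: "norm y = 1" by simp
    have "(INF y'\<in>sphere 0 1. ereal (J \<epsilon> y + J \<epsilon> (-y'))) \<le> ereal (J \<epsilon> y + J \<epsilon> (-u))"
      using u_unit by (intro INF_lower) simp
    also have "\<dots> \<le> ereal (J \<epsilon> u + J \<epsilon> (-u) + Bp \<epsilon>)"
      using comp[OF True u_unit y eps ip_u[OF y]] by simp
    finally show "(INF y'\<in>sphere 0 1. ereal (J \<epsilon> y + J \<epsilon> (-y'))) \<le> ereal (J \<epsilon> u + J \<epsilon> (-u) + Bp \<epsilon>)" .
  qed
  show ?thesis using lo up by simp
next
  case False
  then have d1: "DIM('a) = 1" using DIM_positive[where 'a='a] by linarith
  then obtain b :: 'a where b: "Basis = {b}" using card_1_singletonE by blast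
  have nb: "norm b = 1" using b by (metis insertI1 norm_Basis)
  have rep: "z = (z \<bullet> b) *\<^sub>R b" for z :: 'a
  proof -
    have "z = (\<Sum>b'\<in>Basis. (z \<bullet> b') *\<^sub>R b')" by (rule euclidean_representation[symmetric])
    also have "\<dots> = (z \<bullet> b) *\<^sub>R b" by (simp add: b)
    finally show ?thesis .
  qed
  have two: "y = u \<or> y = -u" if "norm y = 1" for y
  proof -
    have "\<bar>y \<bullet> b\<bar> = 1" using that nb by (subst (asm) rep) simp
    moreover have "\<bar>u \<bullet> b\<bar> = 1" using u_unit nb by (subst (asm) rep) simp
    ultimately have "y \<bullet> b = u \<bullet> b \<or> y \<bullet> b = - (u \<bullet> b)" by (auto simp: abs_if split: if_splits)
    then show ?thesis by (metis rep inner_minus_left)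
  qed
  have sph: "sphere (0::'a) 1 = {u, -u}"
  proof (rule set_eqI)
    fix y :: 'a
    show "y \<in> sphere 0 1 \<longleftrightarrow> y \<in> {u, -u}" using two[of y] u_unit by auto
  qed
  have "Leps s \<epsilon> \<phi> x = ereal (J \<epsilon> u + J \<epsilon> (-u))"
  proof -
    have I: "(INF y'\<in>{u,-u}. ereal (f y')) = ereal (min (f u) (f (-u)))" for f :: "'a \<Rightarrow> real"
      by (simp add: inf_min min_def)
    have S: "(SUP y\<in>{u,-u}. ereal (f y)) = ereal (max (f u) (f (-u)))" for f :: "'a \<Rightarrow> real"
      by (simp add: sup_max max_def bot_ereal_def)
    show ?thesis unfolding Leps_eq[OF eps(1)] sph I S
      by (cases "J \<epsilon> u \<le> J \<epsilon> (-u)") (simp_all add: min_def max_def)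
  qed
  then show ?thesis using Bp_nonneg[OF eps] by simp
qed

end

theorem corollary3p2:
  fixes \<phi> :: "'a::euclidean_space \<Rightarrow> real"
    and x :: 'a and \<eta> s eps :: real
    and g :: "'a \<Rightarrow> 'a" and H :: "'a \<Rightarrow> 'a \<Rightarrow>\<^sub>L 'a"
  assumes s: "1/2 < s" "s < 1"
    and eta: "0 < \<eta>"
    and bdd: "bounded (range \<phi>)"
    and borel: "\<phi> \<in> borel_measurable borel"
    and grad: "\<And>z. z \<in> cball x \<eta> \<Longrightarrow> (\<phi> has_derivative (\<lambda>h. g z \<bullet> h)) (at z within cball x \<eta>)"
    and hess: "\<And>z. z \<in> cball x \<eta> \<Longrightarrow> (g has_derivative blinfun_apply (H z)) (at z within cball x \<eta>)"
    and hess_cont: "continuous_on (cball x \<eta>) H"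
    and unif: "uniformly_continuous_on (- cball x \<eta>) \<phi>"
    and p_nz: "g x \<noteq> 0"
    and eps: "0 < eps" "eps < \<eta>"
  shows "\<bar>Leps s eps \<phi> x - Lfull s \<phi> x\<bar> \<le>
    ereal (
      (let Cx = (1/2) * (SUP z\<in>ball x \<eta>. norm (H z));
           A = A_eps s \<phi> x \<eta> (g x) Cx eps
       in 4 * cs s * s * Cx * (\<eta> powr (2 - 2 * s) - eps powr (2 - 2 * s)) * A
          + cs s * (1 - s) * (\<eta> powr (-2 * s) + (2 * s / (2 * s - 1)) * \<eta> powr (1 - 2 * s))
              * omega_phi \<phi> x \<eta> A
          + cs s * s * Cx * eps powr (2 - 2 * s)))"
proof -
  interpret C: cor \<phi> x \<eta> s g H
    using s eta bdd borel grad hess hess_cont p_nz by unfold_locales auto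
  obtain F0 where F0: "((\<lambda>\<delta>. C.J \<delta> C.u + C.J \<delta> (- C.u)) \<longlongrightarrow> F0) (at_right 0)"
    and F0b: "\<bar>F0 - (C.J eps C.u + C.J eps (- C.u))\<bar> \<le> 2 * C.Cx * (Cs s * eps powr (2 - 2 * s) / (2 - 2 * s))"
    using C.F0_lim[OF C.u_unit eps(1) less_imp_le[OF eps(2)]] by blast
  have Lf: "Lfull s \<phi> x = ereal F0" by (rule C.Lfull_val[OF F0])
  note LB = C.Leps_bounds[OF eps]
  obtain L where L: "Leps s eps \<phi> x = ereal L"
    using LB by (cases "Leps s eps \<phi> x") auto
  have Lb: "\<bar>L - (C.J eps C.u + C.J eps (- C.u))\<bar> \<le> C.Bp eps" using LB L by (simp add: abs_le_iff)
  have T3: "cs s * s * C.Cx * eps powr (2 - 2 * s) = 2 * C.Cx * (Cs s * eps powr (2 - 2 * s) / (2 - 2 * s))"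
    using s by (simp add: cs_def field_simps)
  have "\<bar>L - F0\<bar> \<le> C.Bp eps + cs s * s * C.Cx * eps powr (2 - 2 * s)"
    using Lb F0b T3 by linarith
  then show ?thesis
    unfolding L Lf Let_def C.Cx_def[symmetric] C.Bp_def C.om_def by simp
qed

end
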